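(* Assume $B\subseteq A\subsetneq[m]$ and let $\rho=0$ if $B=A$, $\rho=1$ if $B\subsetneq A$. (a) If $q\ge3$, or $q=2$ and $|[m]\setminus A|\ge2$, then $\mathcal C_{\overline{\mathcal N}_2}$ is a $q$-ary $\left[\frac{2q^{|B|+|C|}(q^m-q^{|A|})}{q-1},\ 2m+|C|,\ (q^m-\rho q^{|A|})q^{|B|+|C|-1}\right]$ locally repairable code with locality $2$. (b) If $q=2$ and $|[m]\setminus A|=1$, then $\mathcal C_{\overline{\mathcal N}_2}$ is a binary $\left[2^{m+|B|+|C|},\ 2m+|C|,\ (2-\rho)2^{m+|B|+|C|-2}\right]$ locally repairable code with locality $3$.
   Context: $q$ is a prime power, $\mathbb F_q$ the field of order $q$, $\mathbb F_q^*=\mathbb F_q\setminus\{0\}$, $m\ge2$, $[m]=\{1,\dots,m\}$, $\mathrm{supp}(v)=\{i:v_i\ne0\}$. For nonempty $P\subseteq[m]$, $\Delta_P=\{v\in\mathbb F_q^m:\mathrm{supp}(v)\subseteq P\}$, $\Delta_P^c=\mathbb F_q^m\setminus\Delta_P$. $A,B,C$ are nonempty subsets of $[m]$. Let $\mathcal N_2=\{(w_2+\omega,w_3,w_1)\in\mathbb F_q^{3m}: w_1\in\Delta_A^c,\ w_2\in\Delta_B,\ w_3\in\Delta_C,\ \omega\in\{\mathbf 0,w_1\}\}$ (closed under multiplication by $\mathbb F_q^*$), let $\overline{\mathcal N}_2$ contain exactly one element of each class $\{\alpha x:\alpha\in\mathbb F_q^*\}$, $x\in\mathcal N_2$, let $G$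 be the $3m\times|\overline{\mathcal N}_2|$ matrix whose columns are the elements of $\overline{\mathcal N}_2$, and let $\mathcal C_{\overline{\mathcal N}_2}$ be the row span of $G$ over $\mathbb F_q$. The code has locality $r$ (with respect to $G$) if $r$ is the least positive integer such that every column of $G$ is an $\mathbb F_q$-linear combination of at most $r$ other columns of $G$; a $q$-ary $[n,k,d]$ locally repairable code with locality $r$ is a linear $[n,k,d]$ code (length, dimension, minimum Hamming distance) with locality $r$. *)

theory Defs
  imports Complex_Main "HOL-Library.Function_Algebras"
begin

text \<open>Vectors of F_q^m are functions nat => 'a vanishing outside [m] = {1..m}.\<close>

definition Fvec :: "nat \<Rightarrow> (nat \<Rightarrow> 'a::zero) set" where
  "Fvec m = {v. \<forall>i. i \<notin> {1..m} \<longrightarrow> v i = 0}"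

definition supp :: "(nat \<Rightarrow> 'a::zero) \<Rightarrow> nat set" where
  "supp v = {i. v i \<noteq> 0}"

definition Delta :: "nat \<Rightarrow> nat set \<Rightarrow> (nat \<Rightarrow> 'a::zero) set" where
  "Delta m P = {v \<in> Fvec m. supp v \<subseteq> P}"

definition Deltac :: "nat \<Rightarrow> nat set \<Rightarrow> (nat \<Rightarrow> 'a::zero) set" where
  "Deltac m P = Fvec m - Delta m P"

definition concat3 :: "nat \<Rightarrow> (nat \<Rightarrow> 'a::zero) \<Rightarrow> (nat \<Rightarrow> 'a) \<Rightarrow> (nat \<Rightarrow> 'a) \<Rightarrow> nat \<Rightarrow> 'a" where
  "concat3 m u v w = (\<lambda>i. if 1 \<le> i \<and> i \<le> m then u i
                          else if m < i \<and> i \<le> 2*m then v (i - m)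
                          else if 2*m < i \<and> i \<le> 3*m then w (i - 2*m) else 0)"

definition N2 :: "nat \<Rightarrow> nat set \<Rightarrow> nat set \<Rightarrow> nat set \<Rightarrow> (nat \<Rightarrow> 'a::field) set" where
  "N2 m A B C = {concat3 m (\<lambda>i. w2 i + om i) w3 w1 | w1 w2 w3 om.
      w1 \<in> Deltac m A \<and> w2 \<in> Delta m B \<and> w3 \<in> Delta m C \<and> om \<in> {(\<lambda>_. 0), w1}}"

definition is_projective_rep :: "(nat \<Rightarrow> 'a::field) set \<Rightarrow> (nat \<Rightarrow> 'a) set \<Rightarrow> bool" where
  "is_projective_rep X Nbar \<longleftrightarrow> Nbar \<subseteq> X \<and>
     (\<forall>x\<in>X. \<exists>!y. y \<in> Nbar \<and> (\<exists>\<alpha>. \<alpha> \<noteq> 0 \<and> y = (\<lambda>i. \<alpha> * x i)))"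

text \<open>Row span of the 3m x |Nbar| matrix G whose columns are the elements of Nbar.
  Codewords are indexed by the columns (coordinates outside Nbar are 0);
  the codeword with coefficient vector x (over the 3m rows) is c |-> sum_i x_i c_i.\<close>

definition code :: "nat \<Rightarrow> (nat \<Rightarrow> 'a::field) set \<Rightarrow> ((nat \<Rightarrow> 'a) \<Rightarrow> 'a) set" where
  "code m Nbar = (\<lambda>x. \<lambda>c. if c \<in> Nbar then (\<Sum>i\<in>{1..3*m}. x i * c i) else 0) ` Fvec (3*m)"

definition hweight :: "(nat \<Rightarrow> 'a::field) set \<Rightarrow> ((nat \<Rightarrow> 'a) \<Rightarrow> 'a) \<Rightarrow> nat" where
  "hweight Nbar f = card {c \<in> Nbar. f c \<noteq> 0}"

definition code_dim :: "((nat \<Rightarrow> 'a::field) \<Rightarrow> 'a) set \<Rightarrow> nat" where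
  "code_dim V = vector_space.dim (\<lambda>(a::'a) f. (\<lambda>c. a * f c)) V"

definition min_dist :: "(nat \<Rightarrow> 'a::field) set \<Rightarrow> ((nat \<Rightarrow> 'a) \<Rightarrow> 'a) set \<Rightarrow> nat \<Rightarrow> bool" where
  "min_dist Nbar V d \<longleftrightarrow> (\<exists>f\<in>V. f \<noteq> (\<lambda>_. 0) \<and> hweight Nbar f = d) \<and>
      (\<forall>f\<in>V. f \<noteq> (\<lambda>_. 0) \<longrightarrow> d \<le> hweight Nbar f)"

definition locality_le :: "(nat \<Rightarrow> 'a::field) set \<Rightarrow> nat \<Rightarrow> bool" where
  "locality_le Nbar r \<longleftrightarrow> (\<forall>c\<in>Nbar. \<exists>S a. S \<subseteq> Nbar - {c} \<and> card S \<le> r \<and>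
       (\<forall>j. c j = (\<Sum>s\<in>S. a s * s j)))"

definition has_locality :: "(nat \<Rightarrow> 'a::field) set \<Rightarrow> nat \<Rightarrow> bool" where
  "has_locality Nbar r \<longleftrightarrow> 0 < r \<and> locality_le Nbar r \<and>
      (\<forall>r'. 0 < r' \<and> r' < r \<longrightarrow> \<not> locality_le Nbar r')"

definition is_LRC :: "nat \<Rightarrow> (nat \<Rightarrow> 'a::field) set \<Rightarrow> nat \<Rightarrow> nat \<Rightarrow> nat \<Rightarrow> nat \<Rightarrow> bool" where
  "is_LRC m Nbar n k d r \<longleftrightarrow> finite Nbar \<and> card Nbar = n \<and> code_dim (code m Nbar) = k \<and>
     min_dist Nbar (code m Nbar) d \<and> has_locality Nbar r"

end

theory Submission
  imports Defs "HOL-Library.FuncSet"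
begin


definition DP :: "nat set \<Rightarrow> (nat \<Rightarrow> 'a::zero) set" where
  "DP P = {v. \<forall>i. i \<notin> P \<longrightarrow> v i = 0}"

lemma Delta_DP: "P \<subseteq> {1..n} \<Longrightarrow> Delta n P = DP P"
  unfolding Delta_def DP_def Fvec_def supp_def by auto

lemma Fvec_DP: "Fvec n = DP {1..n}"
  unfolding DP_def Fvec_def by auto

lemma card_DP:
  assumes "finite P"
  shows "finite (DP P :: (nat \<Rightarrow> 'a::{finite,zero}) set) \<and>
         card (DP P :: (nat \<Rightarrow> 'a) set) = card (UNIV::'a set) ^ card P"
proof -
  have inj: "inj_on (\<lambda>v. restrict v P) (DP P :: (nat \<Rightarrow> 'a) set)"
  proof (rule inj_onI)
    fix u v :: "nat \<Rightarrow> 'a" assume u: "u \<in> DP P" and v: "v \<in> DP P" and e: "restrict u P = restrict v P"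
    show "u = v"
    proof
      fix i show "u i = v i"
      proof (cases "i \<in> P")
        case True
        have "restrict u P i = restrict v P i" using e by simp
        thus ?thesis using True by simp
      next
        case False thus ?thesis using u v unfolding DP_def by simp
      qed
    qed
  qed
  have img: "(\<lambda>v. restrict v P) ` (DP P :: (nat \<Rightarrow> 'a) set) = PiE P (\<lambda>_. UNIV)"
  proof
    show "(\<lambda>v. restrict v P) ` (DP P :: (nat \<Rightarrow> 'a) set) \<subseteq> PiE P (\<lambda>_. UNIV)"
      by (rule image_subsetI) simp
    show "PiE P (\<lambda>_. UNIV) \<subseteq> (\<lambda>v. restrict v P) ` (DP P :: (nat \<Rightarrow> 'a) set)"
    proof
      fix f :: "nat \<Rightarrow> 'a" assume f: "f \<in> PiE P (\<lambda>_. UNIV)"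
      let ?v = "\<lambda>i. if i \<in> P then f i else (0::'a)"
      have v1: "?v \<in> DP P" by (simp add: DP_def)
      have v2: "restrict ?v P = f"
      proof
        fix i show "restrict ?v P i = f i"
          using f by (cases "i \<in> P") (simp_all add: PiE_def extensional_def)
      qed
      from v2[symmetric] v1 show "f \<in> (\<lambda>v. restrict v P) ` DP P" by (rule image_eqI)
    qed
  qed
  have bij: "bij_betw (\<lambda>v. restrict v P) (DP P :: (nat \<Rightarrow> 'a) set) (PiE P (\<lambda>_. UNIV))"
    using inj img by (simp add: bij_betw_def)
  have "finite (PiE P (\<lambda>_. UNIV :: 'a set))" using assms by (simp add: finite_PiE)
  moreover have "card (PiE P (\<lambda>_. UNIV :: 'a set)) = card (UNIV::'a set) ^ card P"
    using assms by (simp add: card_PiE)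
  ultimately show ?thesis using bij_betw_finite[OF bij] bij_betw_same_card[OF bij] by simp
qed

lemma q_ge2: "2 \<le> card (UNIV :: 'a::{finite,field} set)"
proof -
  have "{0,1} \<subseteq> (UNIV :: 'a set)" by auto
  hence "card {0::'a,1} \<le> card (UNIV :: 'a set)" by (rule card_mono[OF finite_UNIV])
  thus ?thesis by simp
qed

definition ip :: "nat \<Rightarrow> (nat \<Rightarrow> 'a::field) \<Rightarrow> (nat \<Rightarrow> 'a) \<Rightarrow> 'a" where
  "ip n x v = (\<Sum>i\<in>{1..n}. x i * v i)"

lemma ip_zero:
  assumes "\<forall>j\<in>P. x j = 0" "v \<in> DP P"
  shows "ip n x v = 0"
  unfolding ip_def using assms by (auto simp: DP_def intro!: sum.neutral)

lemma ip_upd: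
  assumes "j \<in> {1..n}"
  shows "ip n x (v(j := s)) = ip n x v - x j * v j + x j * s"
proof -
  have "ip n x (v(j := s)) = x j * s + (\<Sum>i\<in>{1..n} - {j}. x i * v i)"
    unfolding ip_def using assms by (simp add: sum.remove[of _ j])
  moreover have "ip n x v = x j * v j + (\<Sum>i\<in>{1..n} - {j}. x i * v i)"
    unfolding ip_def using assms by (simp add: sum.remove[of _ j])
  ultimately show ?thesis by simp
qed

lemma card_nz:
  fixes x :: "nat \<Rightarrow> 'a::{finite,field}"
  assumes P: "P \<subseteq> {1..n}" and j: "j \<in> P" and xj: "x j \<noteq> 0"
  shows "card {v \<in> DP P. ip n x v \<noteq> 0} = (card (UNIV::'a set) - 1) * card (UNIV::'a set) ^ (card P - 1)"
proof -
  have jn: "j \<in> {1..n}" using P j by auto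
  have fP: "finite P" using P finite_subset by blast
  let ?f = "\<lambda>v. (ip n x v, v(j := 0))"
  let ?g = "\<lambda>(t::'a, u::nat\<Rightarrow>'a). u(j := (t - ip n x u) / x j)"
  have bij: "bij_betw ?f {v \<in> DP P. ip n x v \<noteq> 0} ((UNIV - {0::'a}) \<times> (DP (P - {j}) :: (nat \<Rightarrow> 'a) set))"
  proof (rule bij_betw_byWitness[where f'="?g"])
    show "\<forall>a\<in>{v \<in> DP P. ip n x v \<noteq> 0}. ?g (?f a) = a"
    proof
      fix v assume "v \<in> {v \<in> DP P. ip n x v \<noteq> 0}"
      have "ip n x (v(j:=0)) = ip n x v - x j * v j" using ip_upd[OF jn, of x v 0] by simp
      thus "?g (?f v) = v" using xj by (auto simp: fun_eq_iff field_simps)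
    qed
    show "\<forall>a'\<in>(UNIV - {0::'a}) \<times> DP (P - {j}). ?f (?g a') = a'"
    proof
      fix a' assume a': "a' \<in> (UNIV - {0::'a}) \<times> (DP (P - {j}) :: (nat \<Rightarrow> 'a) set)"
      obtain t u where tu: "a' = (t, u)" by force
      have uj: "u j = 0" using a' tu by (auto simp: DP_def)
      have "ip n x (u(j := (t - ip n x u) / x j)) = t"
        using ip_upd[OF jn, of x u] uj xj by (simp add: field_simps)
      thus "?f (?g a') = a'" using tu uj by (auto simp: fun_eq_iff)
    qed
    show "?f ` {v \<in> DP P. ip n x v \<noteq> 0} \<subseteq> (UNIV - {0::'a}) \<times> DP (P - {j})"
      by (auto simp: DP_def)
    show "?g ` ((UNIV - {0::'a}) \<times> DP (P - {j})) \<subseteq> {v \<in> DP P. ip n x v \<noteq> 0}"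
    proof
      fix v assume "v \<in> ?g ` ((UNIV - {0::'a}) \<times> (DP (P - {j}) :: (nat \<Rightarrow> 'a) set))"
      then obtain t u where t: "t \<noteq> 0" and u: "u \<in> DP (P - {j})" and v: "v = u(j := (t - ip n x u) / x j)"
        by auto
      have uj: "u j = 0" using u by (auto simp: DP_def)
      have "ip n x v = t"
        using ip_upd[OF jn, of x u] uj xj v by (simp add: field_simps)
      moreover have "v \<in> DP P" using u j v by (auto simp: DP_def)
      ultimately show "v \<in> {v \<in> DP P. ip n x v \<noteq> 0}" using t by auto
    qed
  qed
  have "card (DP (P - {j}) :: (nat \<Rightarrow> 'a) set) = card (UNIV::'a set) ^ (card P - 1)"
    using card_DP[of "P - {j}", where 'a='a] fP j by simp
  moreover have "card (UNIV - {0::'a}) = card (UNIV::'a set) - 1" by (simp add: card_Diff_subset)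
  ultimately show ?thesis using bij_betw_same_card[OF bij] by (simp add: card_cartesian_product)
qed

lemma card_nz_gen:
  fixes x :: "nat \<Rightarrow> 'a::{finite,field}"
  assumes P: "P \<subseteq> {1..n}"
  shows "card {v \<in> DP P. ip n x v \<noteq> 0} = (if \<exists>j\<in>P. x j \<noteq> 0 then (card (UNIV::'a set) - 1) * card (UNIV::'a set) ^ (card P - 1) else 0)"
proof (cases "\<exists>j\<in>P. x j \<noteq> 0")
  case True then show ?thesis using card_nz[OF P] by auto
next
  case False
  have "{v \<in> DP P. ip n x v \<noteq> 0} = {}" using ip_zero[of P x] False by auto
  then show ?thesis using False by (simp only: card.empty if_False)
qed




lemma rep_ex:
  assumes rep: "is_projective_rep X Nbar" and x: "x \<in> X"
  shows "\<exists>y \<gamma>. y \<in> Nbar \<and> \<gamma> \<noteq> 0 \<and> y = (\<lambda>i. (\<gamma>::'a::field) * x i)"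
proof -
  have "\<forall>x\<in>X. \<exists>!y. y \<in> Nbar \<and> (\<exists>\<alpha>. \<alpha> \<noteq> 0 \<and> y = (\<lambda>i. \<alpha> * x i))"
    using rep unfolding is_projective_rep_def by (rule conjunct2)
  hence "\<exists>!y. y \<in> Nbar \<and> (\<exists>\<alpha>. \<alpha> \<noteq> 0 \<and> y = (\<lambda>i. \<alpha> * x i))" using x by (rule bspec)
  thus ?thesis by (elim ex1E) blast
qed

lemma proj_uniq:
  assumes rep: "is_projective_rep X Nbar" and y1: "y1 \<in> Nbar" and y2: "y2 \<in> Nbar"
    and x: "x \<in> X"
    and a: "(\<alpha>::'a::field) \<noteq> 0" and b: "\<beta> \<noteq> 0"
    and e1: "x = (\<lambda>i. \<alpha> * y1 i)" and e2: "x = (\<lambda>i. \<beta> * y2 i)"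
  shows "y1 = y2"
proof -
  have "\<forall>x\<in>X. \<exists>!y. y \<in> Nbar \<and> (\<exists>\<alpha>. \<alpha> \<noteq> 0 \<and> y = (\<lambda>i. \<alpha> * x i))"
    using rep unfolding is_projective_rep_def by (rule conjunct2)
  hence u: "\<exists>!y. y \<in> Nbar \<and> (\<exists>\<gamma>. \<gamma> \<noteq> 0 \<and> y = (\<lambda>i. \<gamma> * x i))" using x by (rule bspec)
  have "y1 = (\<lambda>i. inverse \<alpha> * x i)" using e1 a by (simp add: fun_eq_iff)
  moreover have "inverse \<alpha> \<noteq> 0" using a by simp
  ultimately have P1: "y1 \<in> Nbar \<and> (\<exists>\<gamma>. \<gamma> \<noteq> 0 \<and> y1 = (\<lambda>i. \<gamma> * x i))" using y1 by blast
  have "y2 = (\<lambda>i. inverse \<beta> * x i)" using e2 b by (simp add: fun_eq_iff)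
  moreover have "inverse \<beta> \<noteq> 0" using b by simp
  ultimately have P2: "y2 \<in> Nbar \<and> (\<exists>\<gamma>. \<gamma> \<noteq> 0 \<and> y2 = (\<lambda>i. \<gamma> * x i))" using y2 by blast
  from u P1 P2 show ?thesis by blast
qed

lemma proj_count:
  fixes X Nbar :: "(nat \<Rightarrow> 'a::{finite,field}) set"
  assumes rep: "is_projective_rep X Nbar" and fin: "finite X"
    and nz: "\<forall>x\<in>X. x \<noteq> (\<lambda>_. 0)"
    and cl: "\<forall>x\<in>X. \<forall>\<alpha>. \<alpha> \<noteq> 0 \<longrightarrow> (\<lambda>i. \<alpha> * x i) \<in> X"
    and R: "\<forall>x \<alpha>. \<alpha> \<noteq> 0 \<longrightarrow> R (\<lambda>i. \<alpha> * x i) = R x"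
  shows "card {x\<in>X. R x} = (card (UNIV::'a set) - 1) * card {y\<in>Nbar. R y}"
proof -
  define cls where "cls y = (\<lambda>\<alpha>. (\<lambda>i. \<alpha> * y i)) ` (UNIV - {0::'a})" for y :: "nat \<Rightarrow> 'a"
  have Nsub: "Nbar \<subseteq> X" using rep by (simp add: is_projective_rep_def)
  have finN: "finite Nbar" using Nsub fin finite_subset by blast
  have eq: "{x\<in>X. R x} = \<Union> (cls ` {y\<in>Nbar. R y})"
  proof
    show "{x\<in>X. R x} \<subseteq> \<Union> (cls ` {y\<in>Nbar. R y})"
    proof
      fix x assume x: "x \<in> {x\<in>X. R x}"
      then obtain y \<gamma> where y: "y \<in> Nbar" and g: "\<gamma> \<noteq> 0" and yx: "y = (\<lambda>i. \<gamma> * x i)"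
        using rep_ex[OF rep] by blast
      have "R y = R x" using R g yx by blast
      hence "R y" using x by simp
      moreover have "x = (\<lambda>i. inverse \<gamma> * y i)" using yx g by (simp add: fun_eq_iff)
      hence "x \<in> cls y" using g unfolding cls_def by auto
      ultimately show "x \<in> \<Union> (cls ` {y\<in>Nbar. R y})" using y by auto
    qed
    show "\<Union> (cls ` {y\<in>Nbar. R y}) \<subseteq> {x\<in>X. R x}"
    proof
      fix x assume "x \<in> \<Union> (cls ` {y\<in>Nbar. R y})"
      then obtain y a where y: "y \<in> Nbar" "R y" and a: "a \<noteq> 0" and xa: "x = (\<lambda>i. a * y i)"
        unfolding cls_def by blast
      have "x \<in> X" using cl Nsub y a xa by blast
      moreover have "R x = R y" using R a xa by blast
      ultimately show "x \<in> {x\<in>X. R x}" using y by simp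
    qed
  qed
  have cc: "card (cls y) = card (UNIV::'a set) - 1" if y: "y \<in> Nbar" for y
  proof -
    have "y \<noteq> (\<lambda>_. 0)" using y Nsub nz by auto
    then obtain i where yi: "y i \<noteq> 0" by auto
    have "inj_on (\<lambda>\<alpha>. (\<lambda>i. \<alpha> * y i)) (UNIV - {0::'a})"
    proof (rule inj_onI)
      fix a b :: 'a assume "(\<lambda>i. a * y i) = (\<lambda>i. b * y i)"
      hence "a * y i = b * y i" by meson
      thus "a = b" using yi by simp
    qed
    thus ?thesis unfolding cls_def by (simp add: card_image card_Diff_subset)
  qed
  have disj: "\<forall>y1\<in>{y\<in>Nbar. R y}. \<forall>y2\<in>{y\<in>Nbar. R y}. y1 \<noteq> y2 \<longrightarrow> cls y1 \<inter> cls y2 = {}"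
  proof (intro ballI impI)
    fix y1 y2 assume y1: "y1 \<in> {y\<in>Nbar. R y}" and y2: "y2 \<in> {y\<in>Nbar. R y}" and ne: "y1 \<noteq> y2"
    show "cls y1 \<inter> cls y2 = {}"
    proof (rule ccontr)
      assume "cls y1 \<inter> cls y2 \<noteq> {}"
      then obtain x where x1: "x \<in> cls y1" and x2: "x \<in> cls y2" by blast
      from x1 obtain a where a: "a \<noteq> 0" and e1: "x = (\<lambda>i. a * y1 i)" unfolding cls_def by blast
      from x2 obtain b where b: "b \<noteq> 0" and e2: "x = (\<lambda>i. b * y2 i)" unfolding cls_def by blast
      have "x \<in> X" using e1 cl y1 Nsub a by auto
      hence "y1 = y2" using proj_uniq[OF rep _ _ _ a b e1 e2] y1 y2 by auto
      thus False using ne by simp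
    qed
  qed
  have "card {x\<in>X. R x} = (\<Sum>y\<in>{y\<in>Nbar. R y}. card (cls y))"
    unfolding eq by (rule card_UN_disjoint) (use finN disj in \<open>auto simp: cls_def\<close>)
  also have "\<dots> = (\<Sum>y\<in>{y\<in>Nbar. R y}. card (UNIV::'a set) - 1)"
    using cc by (intro sum.cong) auto
  finally show ?thesis by simp
qed

lemma loc_family:
  fixes c :: "nat \<Rightarrow> 'a::field" and Y :: "nat \<Rightarrow> nat \<Rightarrow> 'a"
  assumes rep: "is_projective_rep X Nbar" and c: "c \<in> Nbar" and fI: "finite I"
    and Y: "\<forall>i\<in>I. Y i \<in> X" and nm: "\<forall>i\<in>I. \<forall>\<mu>. Y i \<noteq> (\<lambda>j. \<mu> * c j)"
    and sumc: "\<forall>j. c j = (\<Sum>i\<in>I. Y i j)"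
  shows "\<exists>S a. S \<subseteq> Nbar - {c} \<and> card S \<le> card I \<and> (\<forall>j. c j = (\<Sum>s\<in>S. a s * s j))"
proof -
  have "\<forall>i\<in>I. \<exists>r\<beta>. fst r\<beta> \<in> Nbar \<and> snd r\<beta> \<noteq> 0 \<and> fst r\<beta> = (\<lambda>j. snd r\<beta> * Y i j)"
  proof
    fix i assume "i \<in> I"
    then obtain y \<gamma> where "y \<in> Nbar \<and> \<gamma> \<noteq> 0 \<and> y = (\<lambda>j. \<gamma> * Y i j)" using rep_ex[OF rep] Y by blast
    hence "fst (y,\<gamma>) \<in> Nbar \<and> snd (y,\<gamma>) \<noteq> 0 \<and> fst (y,\<gamma>) = (\<lambda>j. snd (y,\<gamma>) * Y i j)"
      by (unfold fst_conv snd_conv) assumption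
    thus "\<exists>r\<beta>. fst r\<beta> \<in> Nbar \<and> snd r\<beta> \<noteq> 0 \<and> fst r\<beta> = (\<lambda>j. snd r\<beta> * Y i j)"
      by blast
  qed
  from bchoice[OF this] obtain rb where rb: "\<forall>i\<in>I. fst (rb i) \<in> Nbar \<and> snd (rb i) \<noteq> 0 \<and> fst (rb i) = (\<lambda>j. snd (rb i) * Y i j)"
    by blast
  define r where "r i = fst (rb i)" for i
  define \<beta> where "\<beta> i = snd (rb i)" for i
  have r: "\<forall>i\<in>I. r i \<in> Nbar \<and> \<beta> i \<noteq> 0 \<and> r i = (\<lambda>j. \<beta> i * Y i j)"
    using rb unfolding r_def \<beta>_def by blast
  have Yr: "Y i j = inverse (\<beta> i) * r i j" if "i \<in> I" for i j
    using r that by simp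
  have rc: "r i \<noteq> c" if i: "i \<in> I" for i
  proof
    assume "r i = c"
    hence "Y i = (\<lambda>j. inverse (\<beta> i) * c j)" using Yr i by (auto simp: fun_eq_iff)
    thus False using nm i by blast
  qed
  define a where "a s = (\<Sum>i\<in>{i\<in>I. r i = s}. inverse (\<beta> i))" for s
  have "\<forall>j. c j = (\<Sum>s\<in>r ` I. a s * s j)"
  proof
    fix j
    have "(\<Sum>s\<in>r ` I. a s * s j) = (\<Sum>s\<in>r ` I. \<Sum>i\<in>{i\<in>I. r i = s}. inverse (\<beta> i) * r i j)"
      unfolding a_def by (intro sum.cong refl) (simp add: sum_distrib_right)
    also have "\<dots> = (\<Sum>i\<in>I. inverse (\<beta> i) * r i j)"
      using sum.image_gen[OF fI, of "\<lambda>i. inverse (\<beta> i) * r i j" r] by simp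
    also have "\<dots> = (\<Sum>i\<in>I. Y i j)" using Yr by (intro sum.cong) auto
    finally show "c j = (\<Sum>s\<in>r ` I. a s * s j)" using sumc by simp
  qed
  moreover have "r ` I \<subseteq> Nbar - {c}" using r rc by auto
  moreover have "card (r ` I) \<le> card I" using fI by (rule card_image_le)
  ultimately show ?thesis by blast
qed




definition Qs :: "nat \<Rightarrow> nat set \<Rightarrow> nat set \<Rightarrow> nat set" where
  "Qs m B C = B \<union> (\<lambda>i. i + m) ` C \<union> (\<lambda>i. i + 2*m) ` {1..m}"
definition Qp :: "nat \<Rightarrow> nat set \<Rightarrow> nat set \<Rightarrow> nat set \<Rightarrow> nat set" where
  "Qp m A B C = B \<union> (\<lambda>i. i + m) ` C \<union> (\<lambda>i. i + 2*m) ` A"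
definition Tm :: "nat \<Rightarrow> (nat \<Rightarrow> 'a::plus) \<Rightarrow> nat \<Rightarrow> 'a" where
  "Tm m v = (\<lambda>i. if 1 \<le> i \<and> i \<le> m then v i + v (i + 2*m) else v i)"
definition X1 :: "nat \<Rightarrow> (nat \<Rightarrow> 'a::plus) \<Rightarrow> nat \<Rightarrow> 'a" where
  "X1 m x = (\<lambda>i. if 2*m < i \<and> i \<le> 3*m then x i + x (i - 2*m) else x i)"
definition blk :: "nat \<Rightarrow> nat \<Rightarrow> (nat \<Rightarrow> 'a::zero) \<Rightarrow> nat \<Rightarrow> 'a" where
  "blk m k v = (\<lambda>i. if 1 \<le> i \<and> i \<le> m then v (i + k*m) else 0)"

lemma mem_Qs: "j \<in> Qs m B C \<longleftrightarrow> j \<in> B \<or> (m < j \<and> j - m \<in> C) \<or> (2*m < j \<and> j \<le> 3*m)"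
  if "B \<subseteq> {1..m}" "C \<subseteq> {1..m}"
proof -
  have "j \<in> (\<lambda>i. i + m) ` C \<longleftrightarrow> (m < j \<and> j - m \<in> C)"
  proof
    assume "j \<in> (\<lambda>i. i + m) ` C"
    then obtain i where i: "i \<in> C" "j = i + m" by blast
    have "1 \<le> i" using that(2) i(1) by auto
    thus "m < j \<and> j - m \<in> C" using i by simp
  next
    assume "m < j \<and> j - m \<in> C" thus "j \<in> (\<lambda>i. i + m) ` C" by (intro image_eqI[of _ _ "j - m"]) auto
  qed
  moreover have "j \<in> (\<lambda>i. i + 2*m) ` {1..m} \<longleftrightarrow> (2*m < j \<and> j \<le> 3*m)"
  proof
    assume "j \<in> (\<lambda>i. i + 2*m) ` {1..m}"
    then obtain i where i: "i \<in> {1..m}" "j = i + 2*m" by blast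
    thus "2*m < j \<and> j \<le> 3*m" by simp
  next
    assume "2*m < j \<and> j \<le> 3*m" thus "j \<in> (\<lambda>i. i + 2*m) ` {1..m}" by (intro image_eqI[of _ _ "j - 2*m"]) auto
  qed
  ultimately show ?thesis unfolding Qs_def by blast
qed

lemma mem_Qp: "j \<in> Qp m A B C \<longleftrightarrow> j \<in> B \<or> (m < j \<and> j - m \<in> C) \<or> (2*m < j \<and> j - 2*m \<in> A)"
  if "B \<subseteq> {1..m}" "C \<subseteq> {1..m}" "A \<subseteq> {1..m}"
proof -
  have "j \<in> (\<lambda>i. i + m) ` C \<longleftrightarrow> (m < j \<and> j - m \<in> C)"
  proof
    assume "j \<in> (\<lambda>i. i + m) ` C"
    then obtain i where i: "i \<in> C" "j = i + m" by blast
    have "1 \<le> i" using that(2) i(1) by auto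
    thus "m < j \<and> j - m \<in> C" using i by simp
  next
    assume "m < j \<and> j - m \<in> C" thus "j \<in> (\<lambda>i. i + m) ` C" by (intro image_eqI[of _ _ "j - m"]) auto
  qed
  moreover have "j \<in> (\<lambda>i. i + 2*m) ` A \<longleftrightarrow> (2*m < j \<and> j - 2*m \<in> A)"
  proof
    assume "j \<in> (\<lambda>i. i + 2*m) ` A"
    then obtain i where i: "i \<in> A" "j = i + 2*m" by blast
    have "1 \<le> i" using that(3) i(1) by auto
    thus "2*m < j \<and> j - 2*m \<in> A" using i by simp
  next
    assume "2*m < j \<and> j - 2*m \<in> A" thus "j \<in> (\<lambda>i. i + 2*m) ` A" by (intro image_eqI[of _ _ "j - 2*m"]) auto
  qed
  ultimately show ?thesis unfolding Qp_def by blast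
qed

lemma card_Q3:
  fixes m :: nat
  assumes "B \<subseteq> {1..m}" "C \<subseteq> {1..m}" "A' \<subseteq> {1..m}"
  shows "card (B \<union> (\<lambda>i. i + m) ` C \<union> (\<lambda>i. i + 2*m) ` A') = card B + card C + card A'"
proof -
  have fB1: "finite B" by (rule finite_subset[OF assms(1)]) simp
  have fB2: "finite C" by (rule finite_subset[OF assms(2)]) simp
  have fB3: "finite A'" by (rule finite_subset[OF assms(3)]) simp
  note fB = fB1 fB2 fB3
  have d1: "B \<inter> (\<lambda>i. i + m) ` C = {}"
  proof -
    { fix j assume j: "j \<in> B" "j \<in> (\<lambda>i. i + m) ` C"
      then obtain i where i: "i \<in> C" "j = i + m" by blast
      have "1 \<le> i" using assms(2) i(1) by auto
      moreover have "j \<le> m" using assms(1) j(1) by auto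
      ultimately have False using i by simp }
    thus ?thesis by blast
  qed
  have d2: "(B \<union> (\<lambda>i. i + m) ` C) \<inter> (\<lambda>i. i + 2*m) ` A' = {}"
  proof -
    { fix j assume j: "j \<in> B \<union> (\<lambda>i. i + m) ` C" "j \<in> (\<lambda>i. i + 2*m) ` A'"
      then obtain i where i: "i \<in> A'" "j = i + 2*m" by blast
      have "1 \<le> i" using assms(3) i(1) by auto
      hence "2*m < j" using i by simp
      moreover have "j \<le> 2*m"
      proof (cases "j \<in> B")
        case True thus ?thesis using assms(1) by auto
      next
        case False
        then obtain k where "k \<in> C" "j = k + m" using j(1) by blast
        thus ?thesis using assms(2) by auto
      qed
      ultimately have False by simp }
    thus ?thesis by blast
  qed
  have "card (B \<union> (\<lambda>i. i + m) ` C \<union> (\<lambda>i. i + 2*m) ` A') = card (B \<union> (\<lambda>i. i + m) ` C) + card ((\<lambda>i. i + 2*m) ` A')"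
    using fB d2 by (intro card_Un_disjoint) auto
  also have "card (B \<union> (\<lambda>i. i + m) ` C) = card B + card ((\<lambda>i. i + m) ` C)"
    using fB d1 by (intro card_Un_disjoint) auto
  also have "card ((\<lambda>i. i + m) ` C) = card C" by (rule card_image) (auto simp: inj_on_def)
  also have "card ((\<lambda>i. i + 2*m) ` A') = card A'" by (rule card_image) (auto simp: inj_on_def)
  finally show ?thesis .
qed

lemma card_Qs: "B \<subseteq> {1..m} \<Longrightarrow> C \<subseteq> {1..m} \<Longrightarrow> card (Qs m B C) = card B + card C + m"
  unfolding Qs_def using card_Q3[of B m C "{1..m}"] by simp

lemma card_Qp: "B \<subseteq> {1..m} \<Longrightarrow> C \<subseteq> {1..m} \<Longrightarrow> A \<subseteq> {1..m} \<Longrightarrow> card (Qp m A B C) = card B + card C + card A"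
  unfolding Qp_def using card_Q3[of B m C A] by simp

lemma Qs_sub: "B \<subseteq> {1..m} \<Longrightarrow> C \<subseteq> {1..m} \<Longrightarrow> Qs m B C \<subseteq> {1..3*m}"
proof
  fix j assume B: "B \<subseteq> {1..m}" and C: "C \<subseteq> {1..m}" and j: "j \<in> Qs m B C"
  hence "j \<in> B \<or> (m < j \<and> j - m \<in> C) \<or> (2*m < j \<and> j \<le> 3*m)" using mem_Qs by blast
  thus "j \<in> {1..3*m}"
  proof (elim disjE)
    assume "j \<in> B" thus ?thesis using B by auto
  next
    assume a: "m < j \<and> j - m \<in> C"
    hence "j - m \<le> m" using C by auto
    thus ?thesis using a by simp
  qed auto
qed

lemma Qp_sub: "A \<subseteq> {1..m} \<Longrightarrow> Qp m A B C \<subseteq> Qs m B C"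
  unfolding Qs_def Qp_def by blast

lemma ip_T:
  fixes x v :: "nat \<Rightarrow> 'a::field"
  shows "ip (3*m) x (Tm m v) = ip (3*m) (X1 m x) v"
proof -
  have fin: "finite {1..3*m}" by simp
  have "ip (3*m) x (Tm m v) = (\<Sum>i\<in>{1..3*m}. x i * v i + (if i \<le> m then x i * v (i + 2*m) else 0))"
    unfolding ip_def Tm_def by (intro sum.cong refl) (auto simp: algebra_simps)
  also have "\<dots> = ip (3*m) x v + (\<Sum>i\<in>{1..3*m}. if i \<le> m then x i * v (i + 2*m) else 0)"
    unfolding ip_def by (simp add: sum.distrib)
  also have "(\<Sum>i\<in>{1..3*m}. if i \<le> m then x i * v (i + 2*m) else 0) = (\<Sum>i\<in>{i\<in>{1..3*m}. i \<le> m}. x i * v (i + 2*m))"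
    by (rule sum.inter_filter[OF fin, symmetric])
  also have "{i\<in>{1..3*m}. i \<le> m} = {1..m}" by auto
  finally have L: "ip (3*m) x (Tm m v) = ip (3*m) x v + (\<Sum>i\<in>{1..m}. x i * v (i + 2*m))" .
  have "ip (3*m) (X1 m x) v = (\<Sum>i\<in>{1..3*m}. x i * v i + (if 2*m < i then x (i - 2*m) * v i else 0))"
    unfolding ip_def X1_def by (intro sum.cong refl) (auto simp: algebra_simps)
  also have "\<dots> = ip (3*m) x v + (\<Sum>i\<in>{1..3*m}. if 2*m < i then x (i - 2*m) * v i else 0)"
    unfolding ip_def by (simp add: sum.distrib)
  also have "(\<Sum>i\<in>{1..3*m}. if 2*m < i then x (i - 2*m) * v i else 0) = (\<Sum>i\<in>{i\<in>{1..3*m}. 2*m < i}. x (i - 2*m) * v i)"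
    by (rule sum.inter_filter[OF fin, symmetric])
  also have "{i\<in>{1..3*m}. 2*m < i} = {1 + 2*m..m + 2*m}" by auto
  also have "(\<Sum>i\<in>{1 + 2*m..m + 2*m}. x (i - 2*m) * v i) = (\<Sum>i\<in>{1..m}. x i * v (i + 2*m))"
    by (subst sum.shift_bounds_cl_nat_ivl) simp
  finally show ?thesis using L by simp
qed




lemma N2_E:
  assumes "(c :: nat \<Rightarrow> 'a::field) \<in> N2 m A B C"
  obtains w1 w2 w3 om where "c = concat3 m (\<lambda>i. w2 i + om i) w3 w1"
      "w1 \<in> Deltac m A" "w2 \<in> Delta m B" "w3 \<in> Delta m C" "om \<in> {(\<lambda>_. 0), w1}"
proof -
  have "\<exists>w1 w2 w3 om. c = concat3 m (\<lambda>i. w2 i + om i) w3 w1 \<and> w1 \<in> Deltac m A \<and> w2 \<in> Delta m B \<and> w3 \<in> Delta m C \<and> om \<in> {(\<lambda>_. 0), w1}"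
    using assms unfolding N2_def by (simp only: mem_Collect_eq)
  thus ?thesis using that by (elim exE conjE)
qed

lemma N2_I:
  assumes "w1 \<in> Deltac m A" "w2 \<in> Delta m B" "w3 \<in> Delta m C" "om \<in> {(\<lambda>_. 0), w1}"
    and "c = concat3 m (\<lambda>i. w2 i + om i) w3 w1"
  shows "(c :: nat \<Rightarrow> 'a::field) \<in> N2 m A B C"
proof -
  have "c = concat3 m (\<lambda>i. w2 i + om i) w3 w1 \<and> w1 \<in> Deltac m A \<and> w2 \<in> Delta m B \<and> w3 \<in> Delta m C \<and> om \<in> {(\<lambda>_. 0), w1}"
    using assms by simp
  hence "\<exists>w1 w2 w3 om. c = concat3 m (\<lambda>i. w2 i + om i) w3 w1 \<and> w1 \<in> Deltac m A \<and> w2 \<in> Delta m B \<and> w3 \<in> Delta m C \<and> om \<in> {(\<lambda>_. 0), w1}"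
    by (intro exI)
  thus ?thesis unfolding N2_def by (simp only: mem_Collect_eq)
qed

lemma concat3_T: "concat3 m (\<lambda>i. w2 i + w1 i) w3 w1 = Tm m (concat3 m w2 w3 w1)"
  unfolding concat3_def Tm_def by (rule ext) simp

lemma concat3_in_D:
  fixes w1 w2 w3 :: "nat \<Rightarrow> 'a::field"
  assumes A: "A \<subseteq> {1..m}" and B: "B \<subseteq> A" and C: "C \<subseteq> {1..m}"
    and w1: "w1 \<in> Deltac m A" and w2: "w2 \<in> Delta m B" and w3: "w3 \<in> Delta m C"
  shows "concat3 m w2 w3 w1 \<in> DP (Qs m B C) - DP (Qp m A B C)"
proof -
  have Bm: "B \<subseteq> {1..m}" using A B by blast
  have w2z: "w2 i = 0" if "i \<notin> B" for i using w2 that unfolding Delta_def Fvec_def supp_def by auto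
  have w3z: "w3 i = 0" if "i \<notin> C" for i using w3 that unfolding Delta_def Fvec_def supp_def by auto
  have w1F: "w1 i = 0" if "i \<notin> {1..m}" for i using w1 that unfolding Deltac_def Fvec_def by auto
  obtain k where k: "k \<in> {1..m}" "k \<notin> A" "w1 k \<noteq> 0"
    using w1 unfolding Deltac_def Delta_def Fvec_def supp_def by auto
  have "concat3 m w2 w3 w1 \<in> DP (Qs m B C)"
    unfolding DP_def
  proof (intro CollectI allI impI)
    fix i assume i: "i \<notin> Qs m B C"
    hence i': "i \<notin> B" "\<not> (m < i \<and> i - m \<in> C)" "\<not> (2*m < i \<and> i \<le> 3*m)"
      using mem_Qs[OF Bm C] by blast+
    show "concat3 m w2 w3 w1 i = 0"
      unfolding concat3_def using i' w2z w3z by auto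
  qed
  moreover have "concat3 m w2 w3 w1 \<notin> DP (Qp m A B C)"
  proof
    assume a: "concat3 m w2 w3 w1 \<in> DP (Qp m A B C)"
    have "k + 2*m \<notin> Qp m A B C"
    proof
      assume "k + 2*m \<in> Qp m A B C"
      hence "k + 2*m \<in> B \<or> (m < k + 2*m \<and> k + 2*m - m \<in> C) \<or> (2*m < k + 2*m \<and> k + 2*m - 2*m \<in> A)"
        using mem_Qp[OF Bm C A] by blast
      moreover have "k + 2*m \<notin> B" using Bm k(1) by auto
      moreover have "k + m \<notin> C" using C k(1) by auto
      ultimately show False using k(2) by (simp add: add.commute)
    qed
    hence "concat3 m w2 w3 w1 (k + 2*m) = 0" using a unfolding DP_def by blast
    moreover have "concat3 m w2 w3 w1 (k + 2*m) = w1 k" unfolding concat3_def using k(1) by auto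
    ultimately show False using k(3) by simp
  qed
  ultimately show ?thesis by blast
qed

lemma D_concat3:
  fixes v :: "nat \<Rightarrow> 'a::field"
  assumes A: "A \<subseteq> {1..m}" and B: "B \<subseteq> A" and C: "C \<subseteq> {1..m}"
    and v: "v \<in> DP (Qs m B C) - DP (Qp m A B C)"
  shows "v = concat3 m (blk m 0 v) (blk m 1 v) (blk m 2 v) \<and> blk m 0 v \<in> Delta m B
     \<and> blk m 1 v \<in> Delta m C \<and> blk m 2 v \<in> Deltac m A"
proof -
  have Bm: "B \<subseteq> {1..m}" using A B by blast
  have vz: "v i = 0" if "i \<notin> Qs m B C" for i using v that unfolding DP_def by blast
  have vQ: "i \<in> B \<or> (m < i \<and> i - m \<in> C) \<or> (2*m < i \<and> i \<le> 3*m)" if "v i \<noteq> 0" for i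
    using vz that mem_Qs[OF Bm C] by blast
  have e: "v = concat3 m (blk m 0 v) (blk m 1 v) (blk m 2 v)"
  proof
    fix i
    show "v i = concat3 m (blk m 0 v) (blk m 1 v) (blk m 2 v) i"
    proof (cases "v i = 0")
      case True
      thus ?thesis unfolding concat3_def blk_def by auto
    next
      case False
      hence "i \<in> B \<or> (m < i \<and> i - m \<in> C) \<or> (2*m < i \<and> i \<le> 3*m)" by (rule vQ)
      moreover have "i \<in> B \<Longrightarrow> 1 \<le> i \<and> i \<le> m" using Bm by auto
      moreover have "i - m \<in> C \<Longrightarrow> i - m \<le> m" using C by auto
      ultimately show ?thesis unfolding concat3_def blk_def by auto
    qed
  qed
  have b0: "blk m 0 v \<in> Delta m B"
    unfolding Delta_def Fvec_def supp_def
  proof (intro CollectI conjI allI impI subsetI)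
    fix i show "i \<notin> {1..m} \<Longrightarrow> blk m 0 v i = 0" unfolding blk_def by auto
    fix j assume "j \<in> {i. blk m 0 v i \<noteq> 0}"
    hence j: "1 \<le> j" "j \<le> m" "v j \<noteq> 0" unfolding blk_def by (auto split: if_splits)
    from vQ[OF j(3)] show "j \<in> B" using j by auto
  qed
  have b1: "blk m 1 v \<in> Delta m C"
    unfolding Delta_def Fvec_def supp_def
  proof (intro CollectI conjI allI impI subsetI)
    fix i show "i \<notin> {1..m} \<Longrightarrow> blk m 1 v i = 0" unfolding blk_def by auto
    fix j assume "j \<in> {i. blk m 1 v i \<noteq> 0}"
    hence j: "1 \<le> j" "j \<le> m" "v (j + m) \<noteq> 0" unfolding blk_def by (auto split: if_splits)
    have "j + m \<notin> B" using Bm j by auto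
    with vQ[OF j(3)] show "j \<in> C" using j by auto
  qed
  have b2: "blk m 2 v \<in> Deltac m A"
  proof -
    obtain i where i: "i \<notin> Qp m A B C" "v i \<noteq> 0" using v unfolding DP_def by blast
    have iQ: "i \<in> B \<or> (m < i \<and> i - m \<in> C) \<or> (2*m < i \<and> i \<le> 3*m)" using vQ[OF i(2)] .
    have "\<not> (i \<in> B \<or> (m < i \<and> i - m \<in> C) \<or> (2*m < i \<and> i - 2*m \<in> A))"
      using i(1) mem_Qp[OF Bm C A] by blast
    with iQ have i2: "2*m < i" "i \<le> 3*m" "i - 2*m \<notin> A" by auto
    define j where "j = i - 2*m"
    have j: "1 \<le> j" "j \<le> m" "j \<notin> A" "j + 2*m = i" using i2 unfolding j_def by auto
    have "blk m 2 v j \<noteq> 0" unfolding blk_def using j i(2) by (simp add: mult_2)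
    hence "blk m 2 v \<notin> Delta m A" using j(3) unfolding Delta_def supp_def by auto
    moreover have "blk m 2 v \<in> Fvec m" unfolding Fvec_def blk_def by auto
    ultimately show ?thesis unfolding Deltac_def by blast
  qed
  show ?thesis using e b0 b1 b2 by blast
qed

lemma N2_eq:
  fixes A B C :: "nat set"
  assumes A: "A \<subseteq> {1..m}" and B: "B \<subseteq> A" and C: "C \<subseteq> {1..m}"
  shows "(N2 m A B C :: (nat \<Rightarrow> 'a::field) set) =
     (DP (Qs m B C) - DP (Qp m A B C)) \<union> Tm m ` (DP (Qs m B C) - DP (Qp m A B C))"
proof
  show "(N2 m A B C :: (nat \<Rightarrow> 'a::field) set) \<subseteq>
     (DP (Qs m B C) - DP (Qp m A B C)) \<union> Tm m ` (DP (Qs m B C) - DP (Qp m A B C))"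
  proof
    fix c :: "nat \<Rightarrow> 'a" assume "c \<in> N2 m A B C"
    then obtain w1 w2 w3 om where c: "c = concat3 m (\<lambda>i. w2 i + om i) w3 w1"
      and w: "w1 \<in> Deltac m A" "w2 \<in> Delta m B" "w3 \<in> Delta m C" "om \<in> {(\<lambda>_. 0), w1}"
      by (rule N2_E)
    have inD: "concat3 m w2 w3 w1 \<in> DP (Qs m B C) - DP (Qp m A B C)"
      using concat3_in_D[OF A B C w(1-3)] .
    show "c \<in> (DP (Qs m B C) - DP (Qp m A B C)) \<union> Tm m ` (DP (Qs m B C) - DP (Qp m A B C))"
    proof (cases "om = (\<lambda>_. 0)")
      case True
      hence "c = concat3 m w2 w3 w1" using c by simp
      thus ?thesis using inD by blast
    next
      case False
      hence "om = w1" using w(4) by blast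
      hence "c = Tm m (concat3 m w2 w3 w1)" using c concat3_T by metis
      thus ?thesis using inD by blast
    qed
  qed
  show "(DP (Qs m B C) - DP (Qp m A B C)) \<union> Tm m ` (DP (Qs m B C) - DP (Qp m A B C))
     \<subseteq> (N2 m A B C :: (nat \<Rightarrow> 'a::field) set)"
  proof
    fix v :: "nat \<Rightarrow> 'a" assume "v \<in> (DP (Qs m B C) - DP (Qp m A B C)) \<union> Tm m ` (DP (Qs m B C) - DP (Qp m A B C))"
    then show "v \<in> N2 m A B C"
    proof
      assume v: "v \<in> DP (Qs m B C) - DP (Qp m A B C)"
      note d = D_concat3[OF A B C v]
      have ve: "v = concat3 m (\<lambda>i. blk m 0 v i + (\<lambda>_. 0) i) (blk m 1 v) (blk m 2 v)" using d by simp
      show ?thesis by (rule N2_I[of "blk m 2 v" m A "blk m 0 v" B "blk m 1 v" C "\<lambda>_. 0"]) (use d ve in simp_all)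
    next
      assume "v \<in> Tm m ` (DP (Qs m B C) - DP (Qp m A B C))"
      then obtain u where u: "u \<in> DP (Qs m B C) - DP (Qp m A B C)" and vu: "v = Tm m u" by blast
      note d = D_concat3[OF A B C u]
      have ve: "v = concat3 m (\<lambda>i. blk m 0 u i + blk m 2 u i) (blk m 1 u) (blk m 2 u)"
        using d vu concat3_T by metis
      show ?thesis by (rule N2_I[of "blk m 2 u" m A "blk m 0 u" B "blk m 1 u" C "blk m 2 u"]) (use d ve in simp_all)
    qed
  qed
qed




lemma Tm_inj: "inj (Tm m :: (nat \<Rightarrow> 'a::ab_group_add) \<Rightarrow> _)"
proof (rule injI)
  fix u v :: "nat \<Rightarrow> 'a" assume e: "Tm m u = Tm m v"
  show "u = v"
  proof
    fix i
    have e3: "u (i + 2*m) = v (i + 2*m)" if "1 \<le> i" for i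
    proof -
      have "Tm m u (i + 2*m) = Tm m v (i + 2*m)" using e by simp
      thus ?thesis unfolding Tm_def using that by simp
    qed
    show "u i = v i"
    proof (cases "1 \<le> i \<and> i \<le> m")
      case True
      have "Tm m u i = Tm m v i" using e by simp
      hence "u i + u (i + 2*m) = v i + v (i + 2*m)" unfolding Tm_def using True by simp
      thus ?thesis using e3[of i] True by simp
    next
      case False
      have "Tm m u i = Tm m v i" using e by simp
      moreover have "Tm m u i = u i" "Tm m v i = v i" unfolding Tm_def using False by auto
      ultimately show ?thesis by simp
    qed
  qed
qed

lemma D_T_disj:
  fixes A B C :: "nat set"
  assumes A: "A \<subseteq> {1..m}" and B: "B \<subseteq> A" and C: "C \<subseteq> {1..m}"
  shows "(DP (Qs m B C) - DP (Qp m A B C)) \<inter> Tm m ` (DP (Qs m B C) - DP (Qp m A B C)) = ({} :: (nat \<Rightarrow> 'a::field) set)"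
proof -
  have Bm: "B \<subseteq> {1..m}" using A B by blast
  { fix v u :: "nat \<Rightarrow> 'a"
    assume v: "v \<in> DP (Qs m B C) - DP (Qp m A B C)" and u: "u \<in> DP (Qs m B C) - DP (Qp m A B C)"
      and vu: "v = Tm m u"
    obtain i where i: "i \<notin> Qp m A B C" "u i \<noteq> 0" using u unfolding DP_def by blast
    have "i \<in> Qs m B C" using i(2) u unfolding DP_def by blast
    hence iQ: "i \<in> B \<or> (m < i \<and> i - m \<in> C) \<or> (2*m < i \<and> i \<le> 3*m)" using mem_Qs[OF Bm C] by blast
    have "\<not> (i \<in> B \<or> (m < i \<and> i - m \<in> C) \<or> (2*m < i \<and> i - 2*m \<in> A))"
      using i(1) mem_Qp[OF Bm C A] by blast
    with iQ have i2: "2*m < i" "i \<le> 3*m" "i - 2*m \<notin> A" by auto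
    define j where "j = i - 2*m"
    have j: "1 \<le> j" "j \<le> m" "j \<notin> A" "j + 2*m = i" using i2 unfolding j_def by auto
    have jB: "j \<notin> B" using j(3) B by blast
    have jQ: "j \<notin> Qs m B C" using mem_Qs[OF Bm C, of j] jB j(2) by auto
    have "v j = 0" using v jQ unfolding DP_def by blast
    moreover have "u j = 0" using u jQ unfolding DP_def by blast
    moreover have "v j = u j + u (j + 2*m)" using vu j unfolding Tm_def by simp
    ultimately have False using i(2) j(4) by simp }
  thus ?thesis by blast
qed

lemma DP_mono: "P \<subseteq> P' \<Longrightarrow> DP P \<subseteq> DP P'"
  unfolding DP_def by blast

lemma count_N2:
  fixes A B C :: "nat set" and R :: "(nat \<Rightarrow> 'a::{finite,field}) \<Rightarrow> bool"
  assumes A: "A \<subseteq> {1..m}" and B: "B \<subseteq> A" and C: "C \<subseteq> {1..m}"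
  shows "card {c \<in> N2 m A B C. R c} =
     card {v \<in> DP (Qs m B C) - DP (Qp m A B C). R v} + card {v \<in> DP (Qs m B C) - DP (Qp m A B C). R (Tm m v)}"
proof -
  let ?D = "DP (Qs m B C) - DP (Qp m A B C) :: (nat \<Rightarrow> 'a) set"
  have Bm: "B \<subseteq> {1..m}" using A B by blast
  have fQ: "finite (Qs m B C)" using Qs_sub[OF Bm C] finite_subset by blast
  have fD: "finite ?D" using card_DP[OF fQ, where 'a='a] by blast
  have eq: "{c \<in> N2 m A B C. R c} = {v \<in> ?D. R v} \<union> Tm m ` {v \<in> ?D. R (Tm m v)}"
    using N2_eq[OF A B C, where 'a='a] by auto
  have disj: "{v \<in> ?D. R v} \<inter> Tm m ` {v \<in> ?D. R (Tm m v)} = {}"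
    using D_T_disj[OF A B C, where 'a='a] by blast
  have "card ({v \<in> ?D. R v} \<union> Tm m ` {v \<in> ?D. R (Tm m v)}) = card {v \<in> ?D. R v} + card (Tm m ` {v \<in> ?D. R (Tm m v)})"
  proof (rule card_Un_disjoint)
    show "finite {v \<in> ?D. R v}" by (rule finite_subset[OF _ fD]) blast
    have "finite {v \<in> ?D. R (Tm m v)}" by (rule finite_subset[OF _ fD]) blast
    thus "finite (Tm m ` {v \<in> ?D. R (Tm m v)})" by (rule finite_imageI)
  qed (rule disj)
  also have "card (Tm m ` {v \<in> ?D. R (Tm m v)}) = card {v \<in> ?D. R (Tm m v)}"
    by (rule card_image) (meson Tm_inj inj_on_subset subset_UNIV)
  finally show ?thesis using eq by simp
qed

lemma card_D_R:
  fixes A B C :: "nat set" and R :: "(nat \<Rightarrow> 'a::{finite,field}) \<Rightarrow> bool"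
  assumes A: "A \<subseteq> {1..m}" and B: "B \<subseteq> A" and C: "C \<subseteq> {1..m}"
  shows "card {v \<in> DP (Qs m B C) - DP (Qp m A B C). R v} = card {v \<in> DP (Qs m B C). R v} - card {v \<in> DP (Qp m A B C). R v}"
proof -
  have Bm: "B \<subseteq> {1..m}" using A B by blast
  have fQ: "finite (Qs m B C)" using Qs_sub[OF Bm C] finite_subset by blast
  have fD: "finite (DP (Qs m B C) :: (nat \<Rightarrow> 'a) set)" using card_DP[OF fQ, where 'a='a] by blast
  have sub: "{v \<in> DP (Qp m A B C). R v} \<subseteq> {v \<in> DP (Qs m B C) :: (nat \<Rightarrow> 'a) set. R v}"
    using DP_mono[OF Qp_sub[OF A, of B C]] by blast
  have "{v \<in> DP (Qs m B C) - DP (Qp m A B C). R v} = {v \<in> DP (Qs m B C). R v} - {v \<in> DP (Qp m A B C). R v}"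
    by blast
  thus ?thesis using card_Diff_subset[OF finite_subset[OF sub] sub] fD by simp
qed




definition sval :: "nat \<Rightarrow> nat \<Rightarrow> nat set \<Rightarrow> nat set \<Rightarrow> nat set \<Rightarrow> (nat \<Rightarrow> 'a::zero) \<Rightarrow> nat" where
  "sval q m A B C x = (if \<exists>j\<in>Qp m A B C. x j \<noteq> 0 then q^m - q^card A
      else if \<exists>j\<in>Qs m B C. x j \<noteq> 0 then q^m else 0)"

lemma concat3_scale: "(\<lambda>i. \<alpha> * concat3 m u v w i) = concat3 m (\<lambda>i. \<alpha> * u i) (\<lambda>i. \<alpha> * v i) (\<lambda>i. (\<alpha>::'a::field) * w i)"
  unfolding concat3_def by (rule ext) simp

locale setting =
  fixes m :: nat and A B C :: "nat set" and Nbar :: "(nat \<Rightarrow> 'a::{finite,field}) set"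
  assumes A: "A \<noteq> {}" "A \<subset> {1..m}" and B: "B \<noteq> {}" "B \<subseteq> A" and C: "C \<noteq> {}" "C \<subseteq> {1..m}"
    and Nb: "is_projective_rep (N2 m A B C) Nbar"
begin

lemma Am: "A \<subseteq> {1..m}" using A by blast
lemma Bm: "B \<subseteq> {1..m}" using A B by blast
lemma fQs: "finite (Qs m B C)" by (rule finite_subset[OF Qs_sub[OF Bm C(2)]]) simp
lemma fQp: "finite (Qp m A B C)" by (rule finite_subset[OF Qp_sub[OF Am, of B C] fQs])

lemma N2_fin: "finite (N2 m A B C :: (nat \<Rightarrow> 'a) set)"
proof -
  have "finite (DP (Qs m B C) :: (nat \<Rightarrow> 'a) set)" using card_DP[OF fQs, where 'a='a] by blast
  hence "finite ((DP (Qs m B C) - DP (Qp m A B C)) \<union> Tm m ` (DP (Qs m B C) - DP (Qp m A B C)) :: (nat \<Rightarrow> 'a) set)"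
    by auto
  thus ?thesis using N2_eq[OF Am B(2) C(2), where 'a='a] by simp
qed

lemma Deltac_ex: "w1 \<in> Deltac m A \<Longrightarrow> \<exists>k. k \<in> {1..m} \<and> k \<notin> A \<and> w1 k \<noteq> 0"
  unfolding Deltac_def Delta_def Fvec_def supp_def by auto

lemma N2_nz: "c \<in> N2 m A B C \<Longrightarrow> c \<noteq> (\<lambda>_. (0::'a))"
proof -
  assume "c \<in> N2 m A B C"
  then obtain w1 w2 w3 om where c: "c = concat3 m (\<lambda>i. w2 i + om i) w3 w1"
      and w: "w1 \<in> Deltac m A" "w2 \<in> Delta m B" "w3 \<in> Delta m C" "om \<in> {(\<lambda>_. 0), w1}"
    by (rule N2_E)
  obtain k where k: "k \<in> {1..m}" "w1 k \<noteq> 0" using Deltac_ex[OF w(1)] by blast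
  have "c (k + 2*m) = w1 k" unfolding c concat3_def using k by auto
  thus ?thesis using k by auto
qed

lemma N2_scale: "c \<in> N2 m A B C \<Longrightarrow> (\<alpha>::'a) \<noteq> 0 \<Longrightarrow> (\<lambda>i. \<alpha> * c i) \<in> N2 m A B C"
proof -
  assume cN: "c \<in> N2 m A B C" and a: "(\<alpha>::'a) \<noteq> 0"
  from cN obtain w1 w2 w3 om where c: "c = concat3 m (\<lambda>i. w2 i + om i) w3 w1"
      and w: "w1 \<in> Deltac m A" "w2 \<in> Delta m B" "w3 \<in> Delta m C" "om \<in> {(\<lambda>_. 0), w1}"
    by (rule N2_E)
  show ?thesis
  proof (rule N2_I)
    show "(\<lambda>i. \<alpha> * w1 i) \<in> Deltac m A" using w(1) a unfolding Deltac_def Delta_def Fvec_def supp_def by auto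
    show "(\<lambda>i. \<alpha> * w2 i) \<in> Delta m B" using w(2) a unfolding Delta_def Fvec_def supp_def by auto
    show "(\<lambda>i. \<alpha> * w3 i) \<in> Delta m C" using w(3) a unfolding Delta_def Fvec_def supp_def by auto
    show "(\<lambda>i. \<alpha> * om i) \<in> {\<lambda>_. 0, (\<lambda>i. \<alpha> * w1 i)}" using w(4) by auto
    show "(\<lambda>i. \<alpha> * c i) = concat3 m (\<lambda>i. \<alpha> * w2 i + \<alpha> * om i) (\<lambda>i. \<alpha> * w3 i) (\<lambda>i. \<alpha> * w1 i)"
      unfolding c concat3_scale by (simp add: distrib_left)
  qed
qed

lemma Nbar_sub: "Nbar \<subseteq> N2 m A B C" using Nb unfolding is_projective_rep_def by blast
lemma Nbar_fin: "finite Nbar" by (rule finite_subset[OF Nbar_sub N2_fin])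

lemma count_D_ip:
  fixes x :: "nat \<Rightarrow> 'a"
  shows "card {v \<in> DP (Qs m B C) - DP (Qp m A B C). ip (3*m) x v \<noteq> 0} =
    (card (UNIV::'a set) - 1) * card (UNIV::'a set) ^ (card B + card C - 1) * sval (card (UNIV::'a set)) m A B C x"
proof -
  let ?q = "card (UNIV::'a set)"
  let ?k = "card B + card C"
  have fB: "finite B" by (rule finite_subset[OF Bm]) simp
  have k1: "1 \<le> ?k" using B(1) fB by (simp add: Suc_leI card_gt_0_iff)
  have cQs: "card (Qs m B C) = ?k + m" using card_Qs[OF Bm C(2)] by simp
  have cQp: "card (Qp m A B C) = ?k + card A" using card_Qp[OF Bm C(2) Am] by simp
  have Qs3: "Qs m B C \<subseteq> {1..3*m}" using Qs_sub[OF Bm C(2)] .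
  have Qp3: "Qp m A B C \<subseteq> {1..3*m}" using Qs3 Qp_sub[OF Am, of B C] by blast
  have eQs: "card {v \<in> DP (Qs m B C). ip (3*m) x v \<noteq> 0} = (if \<exists>j\<in>Qs m B C. x j \<noteq> 0 then (?q - 1) * ?q ^ (?k - 1) * ?q ^ m else 0)"
    using card_nz_gen[OF Qs3, of x] cQs k1 by (simp add: power_add[symmetric])
  have eQp: "card {v \<in> DP (Qp m A B C). ip (3*m) x v \<noteq> 0} = (if \<exists>j\<in>Qp m A B C. x j \<noteq> 0 then (?q - 1) * ?q ^ (?k - 1) * ?q ^ card A else 0)"
    using card_nz_gen[OF Qp3, of x] cQp k1 by (simp add: power_add[symmetric])
  have sub: "\<exists>j\<in>Qp m A B C. x j \<noteq> 0 \<Longrightarrow> \<exists>j\<in>Qs m B C. x j \<noteq> 0" using Qp_sub[OF Am, of B C] by blast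
  show ?thesis
    unfolding card_D_R[OF Am B(2) C(2)] eQs eQp sval_def
    using sub by (auto simp: diff_mult_distrib2)
qed

end




context setting
begin

lemma count_N2_ip:
  fixes x :: "nat \<Rightarrow> 'a"
  shows "card {c \<in> N2 m A B C. ip (3*m) x c \<noteq> 0} =
    (card (UNIV::'a set) - 1) * card (UNIV::'a set) ^ (card B + card C - 1) *
      (sval (card (UNIV::'a set)) m A B C x + sval (card (UNIV::'a set)) m A B C (X1 m x))"
  using count_N2[OF Am B(2) C(2), of "\<lambda>c. ip (3*m) x c \<noteq> 0"] count_D_ip[of x] count_D_ip[of "X1 m x"]
  by (simp add: ip_T distrib_left)

lemma ip_scale: "ip n x (\<lambda>i. \<alpha> * c i) = \<alpha> * ip n x c"
  unfolding ip_def by (simp add: sum_distrib_left algebra_simps)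

lemma hw_formula:
  fixes x :: "nat \<Rightarrow> 'a"
  shows "card {c \<in> Nbar. ip (3*m) x c \<noteq> 0} = card (UNIV::'a set) ^ (card B + card C - 1) *
      (sval (card (UNIV::'a set)) m A B C x + sval (card (UNIV::'a set)) m A B C (X1 m x))"
proof -
  let ?q = "card (UNIV::'a set)"
  have "card {c \<in> N2 m A B C. ip (3*m) x c \<noteq> 0} = (?q - 1) * card {c \<in> Nbar. ip (3*m) x c \<noteq> 0}"
  proof (rule proj_count[OF Nb N2_fin])
    show "\<forall>x\<in>(N2 m A B C :: (nat \<Rightarrow> 'a) set). x \<noteq> (\<lambda>_. 0)" by (intro ballI N2_nz)
    show "\<forall>x\<in>(N2 m A B C :: (nat \<Rightarrow> 'a) set). \<forall>\<alpha>. \<alpha> \<noteq> 0 \<longrightarrow> (\<lambda>i. \<alpha> * x i) \<in> N2 m A B C" by (intro ballI allI impI N2_scale)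
    show "\<forall>c \<alpha>. \<alpha> \<noteq> 0 \<longrightarrow> (ip (3*m) x (\<lambda>i. \<alpha> * c i) \<noteq> 0) = (ip (3*m) x c \<noteq> 0)"
      by (simp add: ip_scale)
  qed
  moreover have "?q - 1 > 0" using q_ge2[where 'a='a] by simp
  ultimately show ?thesis using count_N2_ip[of x] by (simp add: mult.assoc)
qed

lemma cardA_lt: "card A < m"
proof -
  have "card A < card {1..m}" using A(2) by (rule psubset_card_mono[rotated]) simp
  thus ?thesis by simp
qed

lemma q_pow: "2 * card (UNIV::'a set) ^ card A \<le> card (UNIV::'a set) ^ m"
proof -
  let ?q = "card (UNIV::'a set)"
  have "2 * ?q ^ card A \<le> ?q * ?q ^ card A" using q_ge2[where 'a='a] by simp
  also have "\<dots> = ?q ^ Suc (card A)" by simp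
  also have "\<dots> \<le> ?q ^ m" using cardA_lt q_ge2[where 'a='a] by (intro power_increasing) auto
  finally show ?thesis .
qed

lemma X1_low: "j \<le> 2*m \<Longrightarrow> X1 m x j = x j"
  unfolding X1_def by simp

lemma X1_high: "1 \<le> i \<Longrightarrow> i \<le> m \<Longrightarrow> X1 m x (i + 2*m) = x (i + 2*m) + x i"
  unfolding X1_def by simp

lemma sval_pos:
  assumes "0 < sval (card (UNIV::'a set)) m A B C x"
  shows "card (UNIV::'a set) ^ m - card (UNIV::'a set) ^ card A \<le> sval (card (UNIV::'a set)) m A B C x"
  using assms unfolding sval_def by (auto split: if_splits)

lemma sval_noQp:
  assumes "\<not> (\<exists>j\<in>Qp m A B C. x j \<noteq> 0)" "0 < sval (card (UNIV::'a set)) m A B C x"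
  shows "sval (card (UNIV::'a set)) m A B C x = card (UNIV::'a set) ^ m"
  using assms unfolding sval_def by (auto split: if_splits)

lemma sval_zero:
  assumes "sval (card (UNIV::'a set)) m A B C x = 0"
  shows "\<forall>j\<in>Qs m B C. x j = 0"
proof -
  let ?q = "card (UNIV::'a set)"
  have "?q ^ card A < ?q ^ m" using cardA_lt q_ge2[where 'a='a] by (intro power_strict_increasing) auto
  thus ?thesis using assms Qp_sub[OF Am, of B C] unfolding sval_def by (auto split: if_splits)
qed

lemma sum_sval_ge:
  fixes x :: "nat \<Rightarrow> 'a"
  assumes pos: "0 < sval (card (UNIV::'a set)) m A B C x + sval (card (UNIV::'a set)) m A B C (X1 m x)"
  shows "card (UNIV::'a set) ^ m - (if B = A then 0 else 1) * card (UNIV::'a set) ^ card A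
     \<le> sval (card (UNIV::'a set)) m A B C x + sval (card (UNIV::'a set)) m A B C (X1 m x)"
proof -
  let ?q = "card (UNIV::'a set)"
  let ?s = "sval ?q m A B C"
  have qp: "2 * ?q ^ card A \<le> ?q ^ m" by (rule q_pow)
  consider "0 < ?s x" "0 < ?s (X1 m x)" | "?s (X1 m x) = 0" | "?s x = 0" by linarith
  thus ?thesis
  proof cases
    case 1
    hence "?q ^ m - ?q ^ card A \<le> ?s x" "?q ^ m - ?q ^ card A \<le> ?s (X1 m x)" using sval_pos by auto
    moreover have "?q ^ m - (if B = A then 0 else 1) * ?q ^ card A \<le> 2 * (?q ^ m - ?q ^ card A)"
      using qp by auto
    ultimately show ?thesis by linarith
  next
    case 2
    hence z: "\<forall>j\<in>Qs m B C. X1 m x j = 0" by (rule sval_zero)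
    hence sx: "0 < ?s x" using pos 2 by simp
    show ?thesis
    proof (cases "B = A")
      case False
      thus ?thesis using sval_pos[OF sx] by simp
    next
      case True
      have "\<not> (\<exists>j\<in>Qp m A B C. x j \<noteq> 0)"
      proof
        assume "\<exists>j\<in>Qp m A B C. x j \<noteq> 0"
        then obtain j where j: "j \<in> Qp m A B C" "x j \<noteq> 0" by blast
        hence "j \<in> B \<or> (m < j \<and> j - m \<in> C) \<or> (2*m < j \<and> j - 2*m \<in> A)" using mem_Qp[OF Bm C(2) Am] by blast
        moreover have "j \<in> Qs m B C \<Longrightarrow> j \<le> 2*m \<Longrightarrow> False" using z X1_low j(2) by metis
        moreover have "j \<in> B \<Longrightarrow> j \<in> Qs m B C" using mem_Qs[OF Bm C(2)] by blast
        moreover have "m < j \<and> j - m \<in> C \<Longrightarrow> j \<in> Qs m B C" using mem_Qs[OF Bm C(2)] by blast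
        moreover have "j \<in> B \<Longrightarrow> j \<le> 2*m" using Bm by auto
        moreover have "j \<le> 2*m" if h: "j - m \<in> C"
        proof -
          have "j - m \<le> m" using C(2) h by auto
          thus ?thesis by linarith
        qed
        moreover have False if h: "2*m < j \<and> j - 2*m \<in> A"
        proof -
          define i where "i = j - 2*m"
          have i: "i \<in> B" "1 \<le> i" "i \<le> m" "j = i + 2*m" using h True Am unfolding i_def by auto
          have "i \<in> Qs m B C" "j \<in> Qs m B C" using mem_Qs[OF Bm C(2)] i by auto
          hence "X1 m x i = 0" "X1 m x j = 0" using z by auto
          moreover have "X1 m x i = x i" using i by (simp add: X1_low)
          moreover have "X1 m x j = x j + x i" using i X1_high by simp
          ultimately show False using j(2) by simp
        qed
        ultimately show False by blast
      qed
      hence "?s x = ?q ^ m" using sval_noQp sx by blast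
      thus ?thesis using True by simp
    qed
  next
    case 3
    hence z: "\<forall>j\<in>Qs m B C. x j = 0" by (rule sval_zero)
    hence sx: "0 < ?s (X1 m x)" using pos 3 by simp
    show ?thesis
    proof (cases "B = A")
      case False
      thus ?thesis using sval_pos[OF sx] by simp
    next
      case True
      have "\<not> (\<exists>j\<in>Qp m A B C. X1 m x j \<noteq> 0)"
      proof
        assume "\<exists>j\<in>Qp m A B C. X1 m x j \<noteq> 0"
        then obtain j where j: "j \<in> Qp m A B C" "X1 m x j \<noteq> 0" by blast
        hence "j \<in> B \<or> (m < j \<and> j - m \<in> C) \<or> (2*m < j \<and> j - 2*m \<in> A)" using mem_Qp[OF Bm C(2) Am] by blast
        moreover have "j \<in> Qs m B C \<Longrightarrow> j \<le> 2*m \<Longrightarrow> False" using z X1_low j(2) by metis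
        moreover have "j \<in> B \<Longrightarrow> j \<in> Qs m B C" using mem_Qs[OF Bm C(2)] by blast
        moreover have "m < j \<and> j - m \<in> C \<Longrightarrow> j \<in> Qs m B C" using mem_Qs[OF Bm C(2)] by blast
        moreover have "j \<in> B \<Longrightarrow> j \<le> 2*m" using Bm by auto
        moreover have "j \<le> 2*m" if h: "j - m \<in> C"
        proof -
          have "j - m \<le> m" using C(2) h by auto
          thus ?thesis by linarith
        qed
        moreover have False if h: "2*m < j \<and> j - 2*m \<in> A"
        proof -
          define i where "i = j - 2*m"
          have i: "i \<in> B" "1 \<le> i" "i \<le> m" "j = i + 2*m" using h True Am unfolding i_def by auto
          have "i \<in> Qs m B C" "j \<in> Qs m B C" using mem_Qs[OF Bm C(2)] i by auto
          hence "x i = 0" "x j = 0" using z by auto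
          moreover have "X1 m x j = x j + x i" using i X1_high by simp
          ultimately show False using j(2) by simp
        qed
        ultimately show False by blast
      qed
      hence "?s (X1 m x) = ?q ^ m" using sval_noQp sx by blast
      thus ?thesis using True by simp
    qed
  qed
qed

end




context setting
begin

lemma hweight_cw:
  "hweight Nbar (\<lambda>c. if c \<in> Nbar then (\<Sum>i\<in>{1..3*m}. x i * c i) else 0) = card {c \<in> Nbar. ip (3*m) x c \<noteq> 0}"
  unfolding hweight_def ip_def by (rule arg_cong[where f=card]) auto

lemma cw_nz:
  "(\<lambda>c. if c \<in> Nbar then (\<Sum>i\<in>{1..3*m}. x i * c i) else 0) \<noteq> (\<lambda>_. 0) \<longleftrightarrow> {c \<in> Nbar. ip (3*m) x c \<noteq> 0} \<noteq> {}"
  unfolding ip_def fun_eq_iff by auto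

lemma card_N2: "card (N2 m A B C :: (nat \<Rightarrow> 'a) set) =
   2 * (card (UNIV::'a set) ^ (card B + card C + m) - card (UNIV::'a set) ^ (card B + card C + card A))"
proof -
  have "card (N2 m A B C :: (nat \<Rightarrow> 'a) set) = card {c \<in> (N2 m A B C :: (nat \<Rightarrow> 'a) set). True}" by simp
  also have "\<dots> = 2 * card {v \<in> DP (Qs m B C) - DP (Qp m A B C) :: (nat \<Rightarrow> 'a) set. True}"
    using count_N2[OF Am B(2) C(2), where R="\<lambda>_. True" and 'a='a] by simp
  also have "\<dots> = 2 * (card {v \<in> DP (Qs m B C) :: (nat \<Rightarrow> 'a) set. True} - card {v \<in> DP (Qp m A B C) :: (nat \<Rightarrow> 'a) set. True})"
    using card_D_R[OF Am B(2) C(2), where R="\<lambda>_. True" and 'a='a] by simp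
  also have "\<dots> = 2 * (card (UNIV::'a set) ^ (card B + card C + m) - card (UNIV::'a set) ^ (card B + card C + card A))"
    using card_DP[OF fQs, where 'a='a] card_DP[OF fQp, where 'a='a] card_Qs[OF Bm C(2)] card_Qp[OF Bm C(2) Am] by simp
  finally show ?thesis .
qed

lemma card_Nbar_nat: "(card (UNIV::'a set) - 1) * card Nbar =
   2 * (card (UNIV::'a set) ^ (card B + card C + m) - card (UNIV::'a set) ^ (card B + card C + card A))"
proof -
  have "card {c \<in> (N2 m A B C :: (nat \<Rightarrow> 'a) set). True} = (card (UNIV::'a set) - 1) * card {c \<in> Nbar. True}"
  proof (rule proj_count[OF Nb N2_fin])
    show "\<forall>x\<in>(N2 m A B C :: (nat \<Rightarrow> 'a) set). x \<noteq> (\<lambda>_. 0)" by (intro ballI N2_nz)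
    show "\<forall>x\<in>(N2 m A B C :: (nat \<Rightarrow> 'a) set). \<forall>\<alpha>. \<alpha> \<noteq> 0 \<longrightarrow> (\<lambda>i. \<alpha> * x i) \<in> N2 m A B C"
      by (intro ballI allI impI N2_scale)
  qed simp
  thus ?thesis using card_N2 by simp
qed

lemma card_Nbar_real: "real (card Nbar) = 2 * real (card (UNIV::'a set)) ^ (card B + card C) *
   (real (card (UNIV::'a set)) ^ m - real (card (UNIV::'a set)) ^ card A) / (real (card (UNIV::'a set)) - 1)"
proof -
  let ?q = "card (UNIV::'a set)"
  let ?k = "card B + card C"
  have q2: "2 \<le> ?q" by (rule q_ge2)
  have le: "?q ^ (?k + card A) \<le> ?q ^ (?k + m)" using cardA_lt q2 by (intro power_increasing) auto
  have "real ((?q - 1) * card Nbar) = real (2 * (?q ^ (?k + m) - ?q ^ (?k + card A)))"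
    using card_Nbar_nat by simp
  hence "(real ?q - 1) * real (card Nbar) = 2 * (real ?q ^ (?k + m) - real ?q ^ (?k + card A))"
    using q2 le by (simp add: of_nat_diff)
  hence "(real ?q - 1) * real (card Nbar) = 2 * real ?q ^ ?k * (real ?q ^ m - real ?q ^ card A)"
    by (simp add: power_add algebra_simps)
  moreover have "real ?q - 1 > 0" using q2 by simp
  ultimately show ?thesis by (simp add: field_simps)
qed

lemma min_dist_main:
  "min_dist Nbar (code m Nbar) ((card (UNIV::'a set) ^ m - (if B = A then 0 else 1) * card (UNIV::'a set) ^ card A)
     * card (UNIV::'a set) ^ (card B + card C - 1))"
proof -
  let ?q = "card (UNIV::'a set)"
  let ?k = "card B + card C"
  let ?\<rho> = "(if B = A then 0 else 1) :: nat"
  let ?d = "(?q ^ m - ?\<rho> * ?q ^ card A) * ?q ^ (?k - 1)"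
  let ?s = "sval ?q m A B C"
  have q2: "2 \<le> ?q" by (rule q_ge2)
  have qlt: "?q ^ card A < ?q ^ m" using cardA_lt q2 by (intro power_strict_increasing) auto
  have lower: "\<forall>f\<in>code m Nbar. f \<noteq> (\<lambda>_. 0) \<longrightarrow> ?d \<le> hweight Nbar f"
  proof (intro ballI impI)
    fix f assume f: "f \<in> code m Nbar" and fnz: "f \<noteq> (\<lambda>_. 0)"
    then obtain x where fx: "f = (\<lambda>c. if c \<in> Nbar then (\<Sum>i\<in>{1..3*m}. x i * c i) else 0)"
      unfolding code_def by blast
    have ne: "{c \<in> Nbar. ip (3*m) x c \<noteq> 0} \<noteq> {}" using fnz cw_nz fx by blast
    have "card {c \<in> Nbar. ip (3*m) x c \<noteq> 0} > 0"
      using ne Nbar_fin by (simp add: card_gt_0_iff)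
    hence "0 < ?s x + ?s (X1 m x)" using hw_formula[of x] by simp
    hence "?q ^ m - ?\<rho> * ?q ^ card A \<le> ?s x + ?s (X1 m x)" by (rule sum_sval_ge)
    hence "?d \<le> ?q ^ (?k - 1) * (?s x + ?s (X1 m x))" by (simp add: mult.commute)
    thus "?d \<le> hweight Nbar f" unfolding fx hweight_cw hw_formula .
  qed
  obtain j0 where j0: "j0 \<in> {1..m}" "j0 \<notin> B" "j0 \<in> A \<longleftrightarrow> B \<noteq> A"
  proof (cases "B = A")
    case True
    obtain j where "j \<in> {1..m}" "j \<notin> A" using A(2) by blast
    thus ?thesis using that True by blast
  next
    case False
    obtain j where "j \<in> A" "j \<notin> B" using False B(2) by blast
    thus ?thesis using that False Am by blast
  qed
  define x :: "nat \<Rightarrow> 'a" where "x = (\<lambda>i. if i = j0 then 1 else 0)"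
  have xF: "x \<in> Fvec (3*m)" unfolding x_def Fvec_def using j0(1) by auto
  have j0Qs: "j0 \<notin> Qs m B C" using mem_Qs[OF Bm C(2), of j0] j0 by auto
  have sx: "?s x = 0"
  proof -
    have "\<forall>j\<in>Qs m B C. x j = 0" using j0Qs unfolding x_def by auto
    moreover hence "\<forall>j\<in>Qp m A B C. x j = 0" using Qp_sub[OF Am, of B C] by blast
    ultimately show ?thesis unfolding sval_def by auto
  qed
  have x1a: "X1 m x (j0 + 2*m) = 1" using X1_high[of j0 x] j0(1) unfolding x_def by auto
  have x1b: "X1 m x j = 0" if "j \<noteq> j0" "j \<noteq> j0 + 2*m" for j
    unfolding X1_def x_def using that by auto
  have inQs: "j0 + 2*m \<in> Qs m B C" using mem_Qs[OF Bm C(2)] j0(1) by auto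
  have nC: "m + j0 \<notin> C" using C(2) j0(1) by auto
  have nB: "j0 + 2*m \<notin> B" using Bm j0(1) by auto
  have inQp: "j0 + 2*m \<in> Qp m A B C \<longleftrightarrow> j0 \<in> A" using mem_Qp[OF Bm C(2) Am, of "j0 + 2*m"] j0(1) nB nC
    by (simp add: add.commute)
  have j0Qp: "j0 \<notin> Qp m A B C" using j0Qs Qp_sub[OF Am, of B C] by blast
  have sx1: "?s (X1 m x) = ?q ^ m - ?\<rho> * ?q ^ card A"
  proof (cases "B = A")
    case True
    hence "\<not> (\<exists>j\<in>Qp m A B C. X1 m x j \<noteq> 0)" using x1b inQp j0 j0Qp by (metis)
    moreover have "\<exists>j\<in>Qs m B C. X1 m x j \<noteq> 0" using inQs x1a by (intro bexI[of _ "j0 + 2*m"]) auto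
    ultimately show ?thesis using True unfolding sval_def by auto
  next
    case False
    hence "\<exists>j\<in>Qp m A B C. X1 m x j \<noteq> 0" using inQp j0 x1a by auto
    thus ?thesis using False unfolding sval_def by auto
  qed
  let ?f = "\<lambda>c. if c \<in> Nbar then (\<Sum>i\<in>{1..3*m}. x i * c i) else 0"
  have hwf: "hweight Nbar ?f = ?d"
    unfolding hweight_cw hw_formula sx sx1 by (simp add: mult.commute)
  have q0: "0 < ?q" using q2 by linarith
  have "?q ^ m - ?\<rho> * ?q ^ card A > 0" using qlt q0 by auto
  with q0 have "?d > 0" by simp
  hence "card {c \<in> Nbar. ip (3*m) x c \<noteq> 0} > 0" using hwf hweight_cw[of x] by simp
  hence "{c \<in> Nbar. ip (3*m) x c \<noteq> 0} \<noteq> {}" by (simp add: card_gt_0_iff)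
  hence "?f \<noteq> (\<lambda>_. 0)" using cw_nz by blast
  moreover have "?f \<in> code m Nbar" unfolding code_def using xF by blast
  ultimately show ?thesis unfolding min_dist_def using hwf lower by blast
qed

end




lemma sum_app: "(\<Sum>j\<in>I. f j) c = (\<Sum>j\<in>I. f j c)"
proof (cases "finite I")
  case True thus ?thesis by (induct rule: finite_induct) simp_all
next
  case False thus ?thesis by simp
qed

interpretation fsp: vector_space "\<lambda>(a::'a::field) (f::(nat \<Rightarrow> 'a) \<Rightarrow> 'a). (\<lambda>c. a * f c)"
  by unfold_locales (auto simp: fun_eq_iff algebra_simps)

lemma code_dim_eq: "code_dim V = fsp.dim V"
  unfolding code_dim_def by simp

definition ev :: "nat \<Rightarrow> nat \<Rightarrow> 'a::{zero,one}" where
  "ev j = (\<lambda>i. if i = j then 1 else 0)"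

context setting
begin

definition Lf :: "(nat \<Rightarrow> 'a) \<Rightarrow> (nat \<Rightarrow> 'a) \<Rightarrow> 'a" where
  "Lf x = (\<lambda>c. if c \<in> Nbar then (\<Sum>i\<in>{1..3*m}. x i * c i) else 0)"

definition Iset :: "nat set" where "Iset = Qs m {1..m} C"

lemma Iset_sub: "Iset \<subseteq> {1..3*m}" unfolding Iset_def by (rule Qs_sub[OF _ C(2)]) simp

lemma card_Iset: "card Iset = 2*m + card C"
  unfolding Iset_def using card_Qs[of "{1..m}" m C] C(2) by simp

lemma N2_zero_out: "c \<in> N2 m A B C \<Longrightarrow> j \<in> {1..3*m} \<Longrightarrow> j \<notin> Iset \<Longrightarrow> c j = 0"
proof -
  assume cN: "c \<in> N2 m A B C" and j: "j \<in> {1..3*m}" and jI: "j \<notin> Iset"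
  from cN obtain w1 w2 w3 om where c: "c = concat3 m (\<lambda>i. w2 i + om i) w3 w1"
      and w: "w1 \<in> Deltac m A" "w2 \<in> Delta m B" "w3 \<in> Delta m C" "om \<in> {(\<lambda>_. 0), w1}"
    by (rule N2_E)
  have jI': "\<not> (j \<in> {1..m} \<or> (m < j \<and> j - m \<in> C) \<or> (2*m < j \<and> j \<le> 3*m))"
    using jI mem_Qs[of "{1..m}" m C] C(2) unfolding Iset_def by auto
  hence j2: "m < j" "j \<le> 2*m" "j - m \<notin> C" using j by auto
  have "w3 (j - m) = 0" using w(3) j2(3) unfolding Delta_def supp_def by auto
  thus "c j = 0" unfolding c concat3_def using j2 by auto
qed

lemma ip_ev: "j \<in> {1..3*m} \<Longrightarrow> (\<Sum>i\<in>{1..3*m}. ev j i * c i) = (c j :: 'a)"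
proof -
  assume j: "j \<in> {1..3*m}"
  have "(\<Sum>i\<in>{1..3*m}. ev j i * c i) = (\<Sum>i\<in>{1..3*m}. if i = j then c j else 0)"
    by (intro sum.cong) (auto simp: ev_def)
  also have "\<dots> = c j" using j by (simp add: sum.delta)
  finally show ?thesis .
qed

lemma Lf_expand: "Lf x = (\<Sum>j\<in>Iset. (\<lambda>c. x j * Lf (ev j) c))"
proof
  fix c
  show "Lf x c = (\<Sum>j\<in>Iset. (\<lambda>c. x j * Lf (ev j) c)) c"
  proof (cases "c \<in> Nbar")
    case True
    hence cN: "c \<in> N2 m A B C" using Nbar_sub by blast
    have "(\<Sum>i\<in>{1..3*m}. x i * c i) = (\<Sum>i\<in>Iset. x i * c i)"
      by (rule sum.mono_neutral_right) (use Iset_sub N2_zero_out[OF cN] in auto)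
    also have "\<dots> = (\<Sum>j\<in>Iset. x j * (\<Sum>i\<in>{1..3*m}. ev j i * c i))"
    proof (rule sum.cong[OF refl])
      fix j assume "j \<in> Iset"
      hence "j \<in> {1..3*m}" using Iset_sub by blast
      thus "x j * c j = x j * (\<Sum>i\<in>{1..3*m}. ev j i * c i)" using ip_ev by simp
    qed
    finally show ?thesis unfolding Lf_def sum_app using True by simp
  next
    case False
    thus ?thesis unfolding Lf_def sum_app by simp
  qed
qed

lemma Lf_diff: "Lf (\<lambda>i. x i - y i) = (\<lambda>c. Lf x c - Lf y c)"
  unfolding Lf_def by (auto simp: fun_eq_iff algebra_simps sum_subtractf)

lemma Lf_zero:
  assumes "Lf x = (\<lambda>_. 0)"
  shows "\<forall>j\<in>Iset. x j = 0"
proof -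
  let ?q = "card (UNIV::'a set)"
  have e: "{c \<in> Nbar. ip (3*m) x c \<noteq> 0} = {}"
  proof -
    { fix c assume c: "c \<in> Nbar"
      have "Lf x c = 0" using assms by simp
      hence "ip (3*m) x c = 0" using c unfolding Lf_def ip_def by simp }
    thus ?thesis by blast
  qed
  have "?q ^ (card B + card C - 1) * (sval ?q m A B C x + sval ?q m A B C (X1 m x)) = 0"
    using hw_formula[of x] unfolding e by simp
  moreover have "?q ^ (card B + card C - 1) > 0" using q_ge2[where 'a='a] by simp
  ultimately have "sval ?q m A B C x = 0" "sval ?q m A B C (X1 m x) = 0" by simp_all
  hence z0: "\<forall>j\<in>Qs m B C. x j = 0" and z1: "\<forall>j\<in>Qs m B C. X1 m x j = 0" using sval_zero by blast+
  show ?thesis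
  proof
    fix j assume j: "j \<in> Iset"
    show "x j = 0"
    proof (cases "j \<in> {1..m}")
      case True
      have "j + 2*m \<in> Qs m B C" using mem_Qs[OF Bm C(2)] True by auto
      hence "x (j + 2*m) = 0" "X1 m x (j + 2*m) = 0" using z0 z1 by auto
      moreover have "X1 m x (j + 2*m) = x (j + 2*m) + x j" using X1_high[of j x] True by simp
      ultimately show ?thesis by simp
    next
      case False
      hence "(m < j \<and> j - m \<in> C) \<or> (2*m < j \<and> j \<le> 3*m)"
        using j mem_Qs[of "{1..m}" m C] C(2) unfolding Iset_def by auto
      hence "j \<in> Qs m B C" using mem_Qs[OF Bm C(2)] by blast
      thus ?thesis using z0 by blast
    qed
  qed
qed

lemma Lf_inj: "inj_on (\<lambda>j. Lf (ev j)) Iset"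
proof (rule inj_onI)
  fix i j assume i: "i \<in> Iset" and j: "j \<in> Iset" and e: "Lf (ev i) = Lf (ev j)"
  have "Lf (\<lambda>k. ev i k - ev j k) = (\<lambda>_. 0)" using e by (simp add: Lf_diff)
  hence "ev i i - ev j i = (0::'a)" using Lf_zero i by blast
  thus "i = j" unfolding ev_def by (auto split: if_splits)
qed

lemma ind_aux:
  assumes s: "(\<Sum>b\<in>(\<lambda>j. Lf (ev j)) ` Iset. (\<lambda>c. u b * b c)) = 0" and b: "b \<in> (\<lambda>j. Lf (ev j)) ` Iset"
  shows "u b = 0"
proof -
  define y where "y = (\<lambda>i. if i \<in> Iset then u (Lf (ev i)) else (0::'a))"
  have "Lf y = (\<Sum>j\<in>Iset. (\<lambda>c. y j * Lf (ev j) c))" by (rule Lf_expand)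
  also have "\<dots> = (\<Sum>j\<in>Iset. (\<lambda>c. u (Lf (ev j)) * Lf (ev j) c))"
    unfolding y_def by (intro sum.cong) auto
  also have "\<dots> = (\<Sum>b\<in>(\<lambda>j. Lf (ev j)) ` Iset. (\<lambda>c. u b * b c))"
    using sum.reindex[OF Lf_inj, of "\<lambda>b. (\<lambda>c. u b * b c)"] by simp
  finally have "Lf y = (\<lambda>_. 0)" using s by (simp add: zero_fun_def)
  hence "\<forall>j\<in>Iset. y j = 0" by (rule Lf_zero)
  moreover obtain j where "j \<in> Iset" "b = Lf (ev j)" using b by blast
  ultimately show "u b = 0" unfolding y_def by auto
qed

lemma dim_code: "code_dim (code m Nbar) = 2*m + card C"
proof -
  let ?Bs = "(\<lambda>j. Lf (ev j)) ` Iset"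
  have fI: "finite Iset" by (rule finite_subset[OF Iset_sub]) simp
  have codeL: "code m Nbar = Lf ` Fvec (3*m)" unfolding code_def Lf_def by simp
  have sub1: "?Bs \<subseteq> code m Nbar"
  proof
    fix f assume "f \<in> ?Bs"
    then obtain j where j: "j \<in> Iset" and f: "f = Lf (ev j)" by blast
    have "ev j \<in> (Fvec (3*m) :: (nat \<Rightarrow> 'a) set)" using j Iset_sub unfolding ev_def Fvec_def by auto
    thus "f \<in> code m Nbar" unfolding codeL f by blast
  qed
  have sub2: "code m Nbar \<subseteq> fsp.span ?Bs"
  proof
    fix f assume "f \<in> code m Nbar"
    then obtain x where f: "f = Lf x" unfolding codeL by blast
    have "(\<Sum>j\<in>Iset. (\<lambda>c. x j * Lf (ev j) c)) \<in> fsp.span ?Bs"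
      by (intro fsp.span_sum fsp.span_scale fsp.span_base) auto
    thus "f \<in> fsp.span ?Bs" unfolding f Lf_expand[of x] .
  qed
  have fB: "finite ?Bs" using fI by simp
  have ind: "fsp.independent ?Bs"
    apply (rule fsp.independent_if_scalars_zero)
     apply (rule fB)
    apply (erule ind_aux)
    apply assumption
    done
  have "card ?Bs = 2*m + card C" using card_image[OF Lf_inj] card_Iset by simp
  thus ?thesis unfolding code_dim_eq using fsp.dim_unique[OF sub1 sub2 ind] by blast
qed

end




lemma fam2:
  fixes c :: "nat \<Rightarrow> 'a::field"
  assumes rep: "is_projective_rep X Nbar" and c: "c \<in> Nbar"
    and Y: "Y0 \<in> X" "Y1 \<in> X" and nm: "\<forall>\<mu>. Y0 \<noteq> (\<lambda>j. \<mu> * c j)" "\<forall>\<mu>. Y1 \<noteq> (\<lambda>j. \<mu> * c j)"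
    and sumc: "\<forall>j. c j = Y0 j + Y1 j"
  shows "\<exists>S a. S \<subseteq> Nbar - {c} \<and> card S \<le> 2 \<and> (\<forall>j. c j = (\<Sum>s\<in>S. a s * s j))"
proof -
  let ?Y = "\<lambda>i::nat. if i = 0 then Y0 else Y1"
  have Y': "\<forall>i\<in>{0,1}. ?Y i \<in> X" using Y by simp
  have nm': "\<forall>i\<in>{0,1}. \<forall>\<mu>. ?Y i \<noteq> (\<lambda>j. \<mu> * c j)" using nm by simp
  have s': "\<forall>j. c j = (\<Sum>i\<in>{0,1}. ?Y i j)" using sumc by simp
  obtain S a where S: "S \<subseteq> Nbar - {c}" "card S \<le> card {0::nat, 1}" "\<forall>j. c j = (\<Sum>s\<in>S. a s * s j)"
    using loc_family[OF rep c _ Y' nm' s'] by blast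
  have "card S \<le> 2" using S(2) by simp
  thus ?thesis using S(1,3) by blast
qed

lemma fam3:
  fixes c :: "nat \<Rightarrow> 'a::field"
  assumes rep: "is_projective_rep X Nbar" and c: "c \<in> Nbar"
    and Y: "Y0 \<in> X" "Y1 \<in> X" "Y2 \<in> X"
    and nm: "\<forall>\<mu>. Y0 \<noteq> (\<lambda>j. \<mu> * c j)" "\<forall>\<mu>. Y1 \<noteq> (\<lambda>j. \<mu> * c j)" "\<forall>\<mu>. Y2 \<noteq> (\<lambda>j. \<mu> * c j)"
    and sumc: "\<forall>j. c j = Y0 j + Y1 j + Y2 j"
  shows "\<exists>S a. S \<subseteq> Nbar - {c} \<and> card S \<le> 3 \<and> (\<forall>j. c j = (\<Sum>s\<in>S. a s * s j))"
proof -
  let ?Y = "\<lambda>i::nat. if i = 0 then Y0 else if i = 1 then Y1 else Y2"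
  have Y': "\<forall>i\<in>{0,1,2}. ?Y i \<in> X" using Y by simp
  have nm': "\<forall>i\<in>{0,1,2}. \<forall>\<mu>. ?Y i \<noteq> (\<lambda>j. \<mu> * c j)" using nm by simp
  have s': "\<forall>j. c j = (\<Sum>i\<in>{0,1,2}. ?Y i j)" using sumc by (simp add: add.assoc)
  obtain S a where S: "S \<subseteq> Nbar - {c}" "card S \<le> card {0::nat, 1, 2}" "\<forall>j. c j = (\<Sum>s\<in>S. a s * s j)"
    using loc_family[OF rep c _ Y' nm' s'] by blast
  have "card S \<le> 3" using S(2) by simp
  thus ?thesis using S(1,3) by blast
qed

lemma concat3_add: "concat3 m u v w j + concat3 m u' v' w' j =
  concat3 m (\<lambda>i. u i + u' i) (\<lambda>i. v i + v' i) (\<lambda>i. w i + (w' i :: 'a::monoid_add)) j"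
  unfolding concat3_def by simp

lemma concat3_at1: "1 \<le> i \<Longrightarrow> i \<le> m \<Longrightarrow> concat3 m u v w i = u i"
  unfolding concat3_def by simp

lemma concat3_at3: "1 \<le> i \<Longrightarrow> i \<le> m \<Longrightarrow> concat3 m u v w (i + 2*m) = w i"
  unfolding concat3_def by simp

lemma om_tau: "om \<in> {(\<lambda>_. 0), w1} \<Longrightarrow> \<exists>\<tau>::'a::field. (\<tau> = 0 \<or> \<tau> = 1) \<and> om = (\<lambda>i. \<tau> * w1 i)"
  by (auto intro: exI[of _ 0] exI[of _ 1])

lemma tau_mem: "(\<tau>::'a::field) = 0 \<or> \<tau> = 1 \<Longrightarrow> (\<lambda>i. \<tau> * y i) \<in> {(\<lambda>_. 0), y}"
  by auto

lemma Fvec_eqI: "u \<in> Fvec m \<Longrightarrow> v \<in> Fvec m \<Longrightarrow> (\<forall>i. 1 \<le> i \<and> i \<le> m \<longrightarrow> u i = v i) \<Longrightarrow> u = v"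
proof -
  assume u: "u \<in> Fvec m" and v: "v \<in> Fvec m" and e: "\<forall>i. 1 \<le> i \<and> i \<le> m \<longrightarrow> u i = v i"
  show "u = v"
  proof
    fix i show "u i = v i"
    proof (cases "1 \<le> i \<and> i \<le> m")
      case True thus ?thesis using e by blast
    next
      case False thus ?thesis using u v unfolding Fvec_def by auto
    qed
  qed
qed

context setting
begin

lemma ev_Deltac: "k \<in> {1..m} \<Longrightarrow> k \<notin> A \<Longrightarrow> (ev k :: nat \<Rightarrow> 'a) \<in> Deltac m A"
  unfolding Deltac_def Delta_def Fvec_def supp_def ev_def by auto

lemma zero_Delta: "(\<lambda>_. 0::'a) \<in> Delta m P"
  unfolding Delta_def Fvec_def supp_def by auto

lemma N2_ne: "(N2 m A B C :: (nat \<Rightarrow> 'a) set) \<noteq> {}"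
proof -
  obtain k where k: "k \<in> {1..m}" "k \<notin> A" using A(2) by blast
  have "concat3 m (\<lambda>i. (\<lambda>_. 0::'a) i + (\<lambda>_. 0) i) (\<lambda>_. 0) (ev k) \<in> N2 m A B C"
    by (rule N2_I[OF ev_Deltac[OF k] zero_Delta zero_Delta]) auto
  thus ?thesis by blast
qed

lemma Nbar_ne: "Nbar \<noteq> {}"
proof -
  obtain c where "c \<in> (N2 m A B C :: (nat \<Rightarrow> 'a) set)" using N2_ne by blast
  thus ?thesis using rep_ex[OF Nb] by blast
qed

lemma mult_self: "c \<in> Nbar \<Longrightarrow> s \<in> Nbar \<Longrightarrow> c = (\<lambda>j. a * s j) \<Longrightarrow> s = c"
proof -
  assume c: "c \<in> Nbar" and s: "s \<in> Nbar" and e: "c = (\<lambda>j. a * s j)"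
  have cX: "c \<in> N2 m A B C" using c Nbar_sub by blast
  have "a \<noteq> 0" using e N2_nz[OF cX] by auto
  moreover have "c = (\<lambda>i. 1 * c i)" by simp
  ultimately have "c = s" using proj_uniq[OF Nb c s cX, of 1 a] e by simp
  thus ?thesis by simp
qed

lemma not_loc1: "\<not> locality_le Nbar 1"
proof
  assume L: "locality_le Nbar 1"
  obtain c where c: "c \<in> Nbar" using Nbar_ne by blast
  then obtain S a where S: "S \<subseteq> Nbar - {c}" "card S \<le> 1" and e: "\<forall>j. c j = (\<Sum>s\<in>S. a s * s j)"
    using L unfolding locality_le_def by blast
  have cX: "c \<in> N2 m A B C" using c Nbar_sub by blast
  have "S \<subseteq> Nbar" using S(1) by blast
  hence fS: "finite S" using Nbar_fin by (rule finite_subset)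
  show False
  proof (cases "card S = 0")
    case True
    hence "S = {}" using fS by simp
    hence "c = (\<lambda>_. 0)" using e by (simp add: fun_eq_iff)
    thus False using N2_nz[OF cX] by simp
  next
    case False
    hence "card S = 1" using S(2) by simp
    then obtain s where s: "S = {s}" by (rule card_1_singletonE)
    hence "c = (\<lambda>j. a s * s j)" using e by (simp add: fun_eq_iff)
    hence "s = c" using mult_self c S(1) s by blast
    thus False using S(1) s by blast
  qed
qed

end




lemma Delta_add:
  fixes u v :: "nat \<Rightarrow> 'a::monoid_add"
  assumes "u \<in> Delta m P" "v \<in> Delta m P"
  shows "(\<lambda>i. u i + v i) \<in> Delta m P"
proof -
  have u: "\<And>i. i \<notin> P \<inter> {1..m} \<Longrightarrow> u i = 0" using assms(1) unfolding Delta_def Fvec_def supp_def by auto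
  have v: "\<And>i. i \<notin> P \<inter> {1..m} \<Longrightarrow> v i = 0" using assms(2) unfolding Delta_def Fvec_def supp_def by auto
  have "\<And>i. i \<notin> P \<inter> {1..m} \<Longrightarrow> u i + v i = 0" using u v by simp
  thus ?thesis unfolding Delta_def Fvec_def supp_def by auto
qed

lemma Delta_neg: "u \<in> Delta m P \<Longrightarrow> (\<lambda>i. - u i :: 'a::ab_group_add) \<in> Delta m P"
  unfolding Delta_def Fvec_def supp_def by auto

lemma Deltac_scale: "w \<in> Deltac m A \<Longrightarrow> (a::'a::field) \<noteq> 0 \<Longrightarrow> (\<lambda>i. a * w i) \<in> Deltac m A"
  unfolding Deltac_def Delta_def Fvec_def supp_def by auto

lemma Delta_Fvec: "u \<in> Delta m P \<Longrightarrow> u \<in> Fvec m"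
  unfolding Delta_def by blast

lemma Delta_out: "u \<in> Delta m P \<Longrightarrow> i \<notin> P \<Longrightarrow> u i = 0"
  unfolding Delta_def supp_def by auto

lemma ev_Delta:
  fixes P :: "nat set"
  shows "j \<in> P \<Longrightarrow> P \<subseteq> {1..m} \<Longrightarrow> (ev j :: nat \<Rightarrow> 'a::zero_neq_one) \<in> Delta m P"
  unfolding Delta_def Fvec_def supp_def ev_def by auto

lemma ex_lambda:
  assumes "3 \<le> card (UNIV::'a::{finite,field} set)"
  obtains l :: "'a::{finite,field}" where "l \<noteq> 0" "l \<noteq> 1"
proof -
  have "UNIV - {0::'a, 1} \<noteq> {}"
  proof
    assume "UNIV - {0::'a, 1} = {}"
    hence "(UNIV::'a set) \<subseteq> {0,1}" by blast
    hence "card (UNIV::'a set) \<le> card {0::'a, 1}" by (rule card_mono[rotated]) simp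
    also have "\<dots> \<le> 2" by (simp add: card_insert_le_m1)
    finally show False using assms by simp
  qed
  thus ?thesis using that by blast
qed

lemma F2_cases:
  assumes "card (UNIV::'a::{finite,field} set) = 2"
  shows "(x::'a::{finite,field}) = 0 \<or> x = 1"
proof -
  have "{0::'a, 1} \<subseteq> UNIV" by simp
  moreover have "card {0::'a, 1} = card (UNIV::'a set)" using assms by simp
  ultimately have "{0::'a, 1} = UNIV" by (intro card_subset_eq) simp_all
  thus ?thesis by blast
qed

lemma F2_two:
  assumes "card (UNIV::'a::{finite,field} set) = 2"
  shows "(1::'a::{finite,field}) + 1 = 0"
proof -
  have "(1::'a) + 1 = 0 \<or> (1::'a) + 1 = 1" using F2_cases[OF assms] by blast
  moreover have "(1::'a) + 1 \<noteq> 1"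
  proof
    assume "(1::'a) + 1 = 1"
    hence "(1::'a) + 1 = 1 + 0" by simp
    hence "(1::'a) = 0" by (simp only: add_left_cancel)
    thus False by simp
  qed
  ultimately show ?thesis by blast
qed

context setting
begin

lemma c_struct:
  assumes c: "c \<in> Nbar"
  obtains w1 w2 w3 \<tau> k0 where "c = concat3 m (\<lambda>i. w2 i + \<tau> * w1 i) w3 w1"
    "w1 \<in> Deltac m A" "w2 \<in> Delta m B" "w3 \<in> Delta m C" "\<tau> = 0 \<or> \<tau> = 1"
    "k0 \<in> {1..m}" "k0 \<notin> A" "w1 k0 \<noteq> 0"
proof -
  have cX: "c \<in> N2 m A B C" using c Nbar_sub by blast
  obtain w1 w2 w3 om where cc: "c = concat3 m (\<lambda>i. w2 i + om i) w3 w1"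
      and w: "w1 \<in> Deltac m A" "w2 \<in> Delta m B" "w3 \<in> Delta m C" "om \<in> {(\<lambda>_. 0), w1}"
    using cX by (rule N2_E)
  obtain \<tau> where t: "\<tau> = 0 \<or> \<tau> = 1" "om = (\<lambda>i. \<tau> * w1 i)" using om_tau[OF w(4)] by blast
  obtain k0 where k: "k0 \<in> {1..m}" "k0 \<notin> A" "w1 k0 \<noteq> 0" using Deltac_ex[OF w(1)] by blast
  show ?thesis by (rule that[OF _ w(1-3) t(1) k]) (simp add: cc t(2))
qed

lemma loc2_big:
  assumes q3: "3 \<le> card (UNIV::'a set)"
  shows "locality_le Nbar 2"
  unfolding locality_le_def
proof
  fix c assume c: "c \<in> Nbar"
  obtain w1 w2 w3 \<tau> k0 where cc: "c = concat3 m (\<lambda>i. w2 i + \<tau> * w1 i) w3 w1"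
    and w: "w1 \<in> Deltac m A" "w2 \<in> Delta m B" "w3 \<in> Delta m C" and t: "\<tau> = 0 \<or> \<tau> = 1"
    and k: "k0 \<in> {1..m}" "k0 \<notin> A" "w1 k0 \<noteq> 0"
    by (rule c_struct[OF c])
  obtain l :: 'a where l: "l \<noteq> 0" "l \<noteq> 1" using ex_lambda[OF q3] by blast
  have l1: "1 - l \<noteq> 0" using l by simp
  obtain j0 where j0: "j0 \<in> B" using B(1) by blast
  define b :: "nat \<Rightarrow> 'a" where "b = (if (\<lambda>i. (l - 1) * w2 i) = (\<lambda>_. 0) then ev j0 else (\<lambda>_. 0))"
  have bD: "b \<in> Delta m B" unfolding b_def using ev_Delta[OF j0 Bm] zero_Delta by auto
  have bne: "b \<noteq> (\<lambda>i. (l - 1) * w2 i)"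
  proof (cases "(\<lambda>i. (l - 1) * w2 i) = (\<lambda>_. 0)")
    case True
    hence be: "b = ev j0" unfolding b_def by simp
    have e0: "ev j0 j0 \<noteq> (0::'a)" unfolding ev_def by simp
    show ?thesis
    proof
      assume "b = (\<lambda>i. (l - 1) * w2 i)"
      hence "ev j0 = (\<lambda>_. 0::'a)" using True be by simp
      hence "ev j0 j0 = (0::'a)" by simp
      thus False using e0 by simp
    qed
  next
    case False thus ?thesis unfolding b_def by simp
  qed
  define Y0 where "Y0 = concat3 m (\<lambda>i. (w2 i + b i) + \<tau> * (l * w1 i)) w3 (\<lambda>i. l * w1 i)"
  define Y1 where "Y1 = concat3 m (\<lambda>i. (- b i) + \<tau> * ((1 - l) * w1 i)) (\<lambda>_. 0) (\<lambda>i. (1 - l) * w1 i)"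
  have Y0N: "Y0 \<in> N2 m A B C" unfolding Y0_def
    by (rule N2_I[OF Deltac_scale[OF w(1) l(1)] Delta_add[OF w(2) bD] w(3) tau_mem[OF t]]) simp
  have Y1N: "Y1 \<in> N2 m A B C" unfolding Y1_def
    by (rule N2_I[OF Deltac_scale[OF w(1) l1] Delta_neg[OF bD] zero_Delta tau_mem[OF t]]) simp
  have sumc: "\<forall>j. c j = Y0 j + Y1 j"
  proof
    fix j
    have E1: "(\<lambda>i. (w2 i + b i + \<tau> * (l * w1 i)) + (- b i + \<tau> * ((1 - l) * w1 i))) = (\<lambda>i. w2 i + \<tau> * w1 i)"
      by (simp add: fun_eq_iff algebra_simps)
    have E2: "(\<lambda>i. w3 i + 0) = w3" by simp
    have E3: "(\<lambda>i. l * w1 i + (1 - l) * w1 i) = w1" by (simp add: fun_eq_iff algebra_simps)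
    have "Y0 j + Y1 j = concat3 m (\<lambda>i. w2 i + \<tau> * w1 i) w3 w1 j"
      unfolding Y0_def Y1_def concat3_add E1 E2 E3 ..
    thus "c j = Y0 j + Y1 j" using cc by simp
  qed
  have bw: "b = (\<lambda>i. (l - 1) * w2 i)" if h: "\<forall>i. 1 \<le> i \<and> i \<le> m \<longrightarrow> b i = (l - 1) * w2 i"
  proof (rule Fvec_eqI[OF Delta_Fvec[OF bD]])
    show "(\<lambda>i. (l - 1) * w2 i) \<in> Fvec m" using Delta_Fvec[OF w(2)] unfolding Fvec_def by auto
  qed (use h in auto)
  have nm0: "\<forall>\<mu>. Y0 \<noteq> (\<lambda>j. \<mu> * c j)"
  proof (intro allI notI)
    fix \<mu> assume e: "Y0 = (\<lambda>j. \<mu> * c j)"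
    have "Y0 (k0 + 2*m) = \<mu> * c (k0 + 2*m)" using e by simp
    hence "l * w1 k0 = \<mu> * w1 k0" using k(1) unfolding Y0_def cc by (simp add: concat3_at3)
    hence mu: "\<mu> = l" using k(3) by simp
    have "\<forall>i. 1 \<le> i \<and> i \<le> m \<longrightarrow> b i = (l - 1) * w2 i"
    proof (intro allI impI)
      fix i assume i: "1 \<le> i \<and> i \<le> m"
      have "Y0 i = \<mu> * c i" using e by simp
      hence "w2 i + b i + \<tau> * (l * w1 i) = l * (w2 i + \<tau> * w1 i)" using i mu unfolding Y0_def cc by (simp add: concat3_at1)
      thus "b i = (l - 1) * w2 i" by (simp add: algebra_simps)
    qed
    thus False using bw bne by blast
  qed
  have nm1: "\<forall>\<mu>. Y1 \<noteq> (\<lambda>j. \<mu> * c j)"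
  proof (intro allI notI)
    fix \<mu> assume e: "Y1 = (\<lambda>j. \<mu> * c j)"
    have "Y1 (k0 + 2*m) = \<mu> * c (k0 + 2*m)" using e by simp
    hence "(1 - l) * w1 k0 = \<mu> * w1 k0" using k(1) unfolding Y1_def cc by (simp add: concat3_at3)
    hence mu: "\<mu> = 1 - l" using k(3) by simp
    have "\<forall>i. 1 \<le> i \<and> i \<le> m \<longrightarrow> b i = (l - 1) * w2 i"
    proof (intro allI impI)
      fix i assume i: "1 \<le> i \<and> i \<le> m"
      have "Y1 i = \<mu> * c i" using e by simp
      hence "- b i + \<tau> * ((1 - l) * w1 i) = (1 - l) * (w2 i + \<tau> * w1 i)" using i mu unfolding Y1_def cc by (simp add: concat3_at1)
      thus "b i = (l - 1) * w2 i" by (simp add: algebra_simps)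
    qed
    thus False using bw bne by blast
  qed
  show "\<exists>S a. S \<subseteq> Nbar - {c} \<and> card S \<le> 2 \<and> (\<forall>j. c j = (\<Sum>s\<in>S. a s * s j))"
    by (rule fam2[OF Nb c Y0N Y1N nm0 nm1 sumc])
qed

lemma loc2_A:
  assumes c2: "2 \<le> card ({1..m} - A)"
  shows "locality_le Nbar 2"
  unfolding locality_le_def
proof
  fix c assume c: "c \<in> Nbar"
  obtain w1 w2 w3 \<tau> k0 where cc: "c = concat3 m (\<lambda>i. w2 i + \<tau> * w1 i) w3 w1"
    and w: "w1 \<in> Deltac m A" "w2 \<in> Delta m B" "w3 \<in> Delta m C" and t: "\<tau> = 0 \<or> \<tau> = 1"
    and k: "k0 \<in> {1..m}" "k0 \<notin> A" "w1 k0 \<noteq> 0"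
    by (rule c_struct[OF c])
  have "({1..m} - A) - {k0} \<noteq> {}"
  proof
    assume "({1..m} - A) - {k0} = {}"
    hence "{1..m} - A \<subseteq> {k0}" by blast
    hence "card ({1..m} - A) \<le> card {k0}" by (rule card_mono[rotated]) simp
    thus False using c2 by simp
  qed
  then obtain k where kk: "k \<in> {1..m}" "k \<notin> A" "k \<noteq> k0" by blast
  define y1 :: "nat \<Rightarrow> 'a" where "y1 = (\<lambda>i. w1 i - ev k i)"
  have w1F: "w1 \<in> Fvec m" using w(1) unfolding Deltac_def by blast
  have y1D: "y1 \<in> Deltac m A"
  proof -
    have "y1 \<in> Fvec m" using w1F kk(1) unfolding y1_def Fvec_def ev_def by auto
    moreover have "y1 k0 = w1 k0" unfolding y1_def ev_def using kk(3) by simp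
    hence "y1 \<notin> Delta m A" using Delta_out[of y1 m A k0] k(2,3) by auto
    ultimately show ?thesis unfolding Deltac_def by blast
  qed
  define Y0 where "Y0 = concat3 m (\<lambda>i. w2 i + \<tau> * y1 i) w3 y1"
  define Y1 where "Y1 = concat3 m (\<lambda>i. (\<lambda>_. 0::'a) i + \<tau> * ev k i) (\<lambda>_. 0) (ev k)"
  have Y0N: "Y0 \<in> N2 m A B C" unfolding Y0_def
    by (rule N2_I[OF y1D w(2) w(3) tau_mem[OF t]]) simp
  have Y1N: "Y1 \<in> N2 m A B C" unfolding Y1_def
    by (rule N2_I[OF ev_Deltac[OF kk(1,2)] zero_Delta zero_Delta tau_mem[OF t]]) simp
  have sumc: "\<forall>j. c j = Y0 j + Y1 j"
  proof
    fix j
    have E1: "(\<lambda>i. (w2 i + \<tau> * y1 i) + ((\<lambda>_. 0::'a) i + \<tau> * ev k i)) = (\<lambda>i. w2 i + \<tau> * w1 i)"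
      unfolding y1_def by (simp add: fun_eq_iff algebra_simps)
    have E2: "(\<lambda>i. w3 i + 0) = w3" by simp
    have E3: "(\<lambda>i. y1 i + ev k i) = w1" unfolding y1_def by simp
    have "Y0 j + Y1 j = concat3 m (\<lambda>i. w2 i + \<tau> * w1 i) w3 w1 j"
      unfolding Y0_def Y1_def concat3_add E1 E2 E3 ..
    thus "c j = Y0 j + Y1 j" using cc by simp
  qed
  have nm0: "\<forall>\<mu>. Y0 \<noteq> (\<lambda>j. \<mu> * c j)"
  proof (intro allI notI)
    fix \<mu> assume e: "Y0 = (\<lambda>j. \<mu> * c j)"
    have "Y0 (k0 + 2*m) = \<mu> * c (k0 + 2*m)" using e by simp
    hence "y1 k0 = \<mu> * w1 k0" using k(1) unfolding Y0_def cc by (simp add: concat3_at3)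
    moreover have "y1 k0 = w1 k0" unfolding y1_def ev_def using kk(3) by simp
    ultimately have mu: "\<mu> = 1" using k(3) by simp
    have "Y0 (k + 2*m) = \<mu> * c (k + 2*m)" using e by simp
    hence "y1 k = w1 k" using kk(1) mu unfolding Y0_def cc by (simp add: concat3_at3)
    thus False unfolding y1_def ev_def by simp
  qed
  have nm1: "\<forall>\<mu>. Y1 \<noteq> (\<lambda>j. \<mu> * c j)"
  proof (intro allI notI)
    fix \<mu> assume e: "Y1 = (\<lambda>j. \<mu> * c j)"
    have "Y1 (k0 + 2*m) = \<mu> * c (k0 + 2*m)" using e by simp
    hence "ev k k0 = \<mu> * w1 k0" using k(1) unfolding Y1_def cc by (simp add: concat3_at3)
    hence mu: "\<mu> = 0" using k(3) kk(3) unfolding ev_def by simp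
    have "Y1 (k + 2*m) = \<mu> * c (k + 2*m)" using e by simp
    hence "ev k k = \<mu> * w1 k" using kk(1) unfolding Y1_def cc by (simp add: concat3_at3)
    thus False using mu unfolding ev_def by simp
  qed
  show "\<exists>S a. S \<subseteq> Nbar - {c} \<and> card S \<le> 2 \<and> (\<forall>j. c j = (\<Sum>s\<in>S. a s * s j))"
    by (rule fam2[OF Nb c Y0N Y1N nm0 nm1 sumc])
qed

lemma loc3:
  assumes q2: "card (UNIV::'a set) = 2"
  shows "locality_le Nbar 3"
  unfolding locality_le_def
proof
  fix c assume c: "c \<in> Nbar"
  obtain w1 w2 w3 \<tau> k0 where cc: "c = concat3 m (\<lambda>i. w2 i + \<tau> * w1 i) w3 w1"
    and w: "w1 \<in> Deltac m A" "w2 \<in> Delta m B" "w3 \<in> Delta m C" and t: "\<tau> = 0 \<or> \<tau> = 1"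
    and k: "k0 \<in> {1..m}" "k0 \<notin> A" "w1 k0 \<noteq> 0"
    by (rule c_struct[OF c])
  have two: "(1::'a) + 1 = 0" by (rule F2_two[OF q2])
  have xx: "\<And>x::'a. x + x = 0"
  proof -
    fix x :: 'a
    have "x + x = (1 + 1) * x" by (simp add: algebra_simps)
    thus "x + x = 0" using two by simp
  qed
  obtain j0 where j0: "j0 \<in> B" using B(1) by blast
  define b :: "nat \<Rightarrow> 'a" where "b = (if w2 = (\<lambda>_. 0) then ev j0 else (\<lambda>_. 0))"
  have bD: "b \<in> Delta m B" unfolding b_def using ev_Delta[OF j0 Bm] zero_Delta by auto
  have bne: "b \<noteq> w2"
  proof (cases "w2 = (\<lambda>_. 0)")
    case True
    hence be: "b = ev j0" unfolding b_def by simp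
    have e0: "ev j0 j0 \<noteq> (0::'a)" unfolding ev_def by simp
    show ?thesis
    proof
      assume "b = w2"
      hence "ev j0 = (\<lambda>_. 0::'a)" using True be by simp
      hence "ev j0 j0 = (0::'a)" by simp
      thus False using e0 by simp
    qed
  next
    case False thus ?thesis unfolding b_def by simp
  qed
  have t': "1 - \<tau> = 0 \<or> 1 - \<tau> = 1" using t by auto
  have t1: "(1::'a) = 0 \<or> (1::'a) = 1" by simp
  have t0: "(0::'a) = 0 \<or> (0::'a) = 1" by simp
  define Y0 where "Y0 = concat3 m (\<lambda>i. w2 i + (1 - \<tau>) * w1 i) w3 w1"
  define Y1 where "Y1 = concat3 m (\<lambda>i. b i + 1 * w1 i) (\<lambda>_. 0) w1"
  define Y2 where "Y2 = concat3 m (\<lambda>i. b i + 0 * w1 i) (\<lambda>_. 0) w1"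
  have Y0N: "Y0 \<in> N2 m A B C" unfolding Y0_def
    by (rule N2_I[OF w(1) w(2) w(3) tau_mem[OF t']]) simp
  have Y1N: "Y1 \<in> N2 m A B C" unfolding Y1_def
    by (rule N2_I[OF w(1) bD zero_Delta tau_mem[OF t1]]) simp
  have Y2N: "Y2 \<in> N2 m A B C" unfolding Y2_def
    by (rule N2_I[OF w(1) bD zero_Delta tau_mem[OF t0]]) simp
  have sumc: "\<forall>j. c j = Y0 j + Y1 j + Y2 j"
  proof
    fix j
    have E1: "(\<lambda>i. (w2 i + (1 - \<tau>) * w1 i) + (b i + 1 * w1 i) + (b i + 0 * w1 i)) = (\<lambda>i. w2 i + \<tau> * w1 i)"
    proof
      fix i
      have "(w2 i + (1 - \<tau>) * w1 i) + (b i + 1 * w1 i) + (b i + 0 * w1 i)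
          = (w2 i + \<tau> * w1 i) + (1 + 1) * (w1 i - \<tau> * w1 i + b i)"
        by (simp add: algebra_simps)
      thus "(w2 i + (1 - \<tau>) * w1 i) + (b i + 1 * w1 i) + (b i + 0 * w1 i) = w2 i + \<tau> * w1 i"
        using two by simp
    qed
    have E2: "(\<lambda>i. w3 i + 0 + 0) = w3" by simp
    have E3: "(\<lambda>i. w1 i + w1 i + w1 i) = w1"
    proof
      fix i show "w1 i + w1 i + w1 i = w1 i" by (simp only: xx add_0_left)
    qed
    have "Y0 j + Y1 j + Y2 j = concat3 m (\<lambda>i. w2 i + \<tau> * w1 i) w3 w1 j"
      unfolding Y0_def Y1_def Y2_def concat3_add E1 E2 E3 ..
    thus "c j = Y0 j + Y1 j + Y2 j" using cc by simp
  qed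
  have mu1: "\<mu> = 1" if "Y (k0 + 2*m) = \<mu> * c (k0 + 2*m)" "Y = concat3 m U V w1" for Y U V \<mu>
  proof -
    have "w1 k0 = \<mu> * w1 k0" using that k(1) unfolding cc by (simp add: concat3_at3)
    thus ?thesis using k(3) by simp
  qed
  have w2k0: "w2 k0 = 0" using Delta_out[OF w(2)] k(2) B(2) by blast
  have bk0: "b k0 = 0" using Delta_out[OF bD] k(2) B(2) by blast
  have bw: "b = w2" if h: "\<forall>i. 1 \<le> i \<and> i \<le> m \<longrightarrow> b i = w2 i"
    by (rule Fvec_eqI[OF Delta_Fvec[OF bD] Delta_Fvec[OF w(2)] h])
  have nm0: "\<forall>\<mu>. Y0 \<noteq> (\<lambda>j. \<mu> * c j)"
  proof (intro allI notI)
    fix \<mu> assume e: "Y0 = (\<lambda>j. \<mu> * c j)"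
    have "Y0 (k0 + 2*m) = \<mu> * c (k0 + 2*m)" using e by simp
    hence "w1 k0 = \<mu> * w1 k0" using k(1) unfolding Y0_def cc by (simp add: concat3_at3)
    hence "\<mu> = 1" using k(3) by simp
    hence "Y0 k0 = c k0" using e by simp
    hence "w2 k0 + (1 - \<tau>) * w1 k0 = w2 k0 + \<tau> * w1 k0" using k(1) unfolding Y0_def cc by (simp add: concat3_at1)
    thus False using t k(3) by (elim disjE) simp_all
  qed
  have nm1: "\<forall>\<mu>. Y1 \<noteq> (\<lambda>j. \<mu> * c j)"
  proof (intro allI notI)
    fix \<mu> assume e: "Y1 = (\<lambda>j. \<mu> * c j)"
    have "Y1 (k0 + 2*m) = \<mu> * c (k0 + 2*m)" using e by simp
    hence "w1 k0 = \<mu> * w1 k0" using k(1) unfolding Y1_def cc by (simp add: concat3_at3)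
    hence "\<mu> = 1" using k(3) by simp
    hence e1: "\<forall>i. Y1 i = c i" using e by simp
    have ei: "b i + w1 i = w2 i + \<tau> * w1 i" if "1 \<le> i \<and> i \<le> m" for i
    proof -
      have "Y1 i = c i" using e1 by blast
      thus ?thesis using that unfolding Y1_def cc by (simp add: concat3_at1)
    qed
    show False using t
    proof
      assume "\<tau> = 0"
      thus False using ei[of k0] k w2k0 bk0 by simp
    next
      assume "\<tau> = 1"
      hence "\<forall>i. 1 \<le> i \<and> i \<le> m \<longrightarrow> b i = w2 i" using ei by simp
      thus False using bw bne by blast
    qed
  qed
  have nm2: "\<forall>\<mu>. Y2 \<noteq> (\<lambda>j. \<mu> * c j)"
  proof (intro allI notI)
    fix \<mu> assume e: "Y2 = (\<lambda>j. \<mu> * c j)"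
    have "Y2 (k0 + 2*m) = \<mu> * c (k0 + 2*m)" using e by simp
    hence "w1 k0 = \<mu> * w1 k0" using k(1) unfolding Y2_def cc by (simp add: concat3_at3)
    hence "\<mu> = 1" using k(3) by simp
    hence e1: "\<forall>i. Y2 i = c i" using e by simp
    have ei: "b i = w2 i + \<tau> * w1 i" if "1 \<le> i \<and> i \<le> m" for i
    proof -
      have "Y2 i = c i" using e1 by blast
      thus ?thesis using that unfolding Y2_def cc by (simp add: concat3_at1)
    qed
    show False using t
    proof
      assume "\<tau> = 0"
      hence "\<forall>i. 1 \<le> i \<and> i \<le> m \<longrightarrow> b i = w2 i" using ei by simp
      thus False using bw bne by blast
    next
      assume "\<tau> = 1"
      thus False using ei[of k0] k w2k0 bk0 by simp
    qed
  qed
  show "\<exists>S a. S \<subseteq> Nbar - {c} \<and> card S \<le> 3 \<and> (\<forall>j. c j = (\<Sum>s\<in>S. a s * s j))"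
    by (rule fam3[OF Nb c Y0N Y1N Y2N nm0 nm1 nm2 sumc])
qed

lemma notloc2:
  assumes q2: "card (UNIV::'a set) = 2" and c1: "card ({1..m} - A) = 1"
  shows "\<not> locality_le Nbar 2"
proof
  assume L: "locality_le Nbar 2"
  obtain k1 where k1: "{1..m} - A = {k1}" using c1 by (rule card_1_singletonE)
  have one: "v (k1 + 2*m) = 1" if v: "v \<in> N2 m A B C" for v :: "nat \<Rightarrow> 'a"
  proof -
    obtain w1 w2 w3 om where cc: "v = concat3 m (\<lambda>i. w2 i + om i) w3 w1"
        and w: "w1 \<in> Deltac m A" "w2 \<in> Delta m B" "w3 \<in> Delta m C" "om \<in> {(\<lambda>_. 0), w1}"
      using v by (rule N2_E)
    obtain k where k: "k \<in> {1..m}" "k \<notin> A" "w1 k \<noteq> 0" using Deltac_ex[OF w(1)] by blast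
    have "k = k1" using k k1 by blast
    hence "v (k1 + 2*m) = w1 k" using k(1) unfolding cc by (simp add: concat3_at3)
    thus ?thesis using k(3) F2_cases[OF q2, of "w1 k"] by simp
  qed
  obtain c where c: "c \<in> Nbar" using Nbar_ne by blast
  then obtain S a where S: "S \<subseteq> Nbar - {c}" "card S \<le> 2" and e: "\<forall>j. c j = (\<Sum>s\<in>S. a s * s j)"
    using L unfolding locality_le_def by blast
  have SN: "S \<subseteq> Nbar" using S(1) by blast
  hence fS: "finite S" using Nbar_fin by (rule finite_subset)
  have cX: "c \<in> N2 m A B C" using c Nbar_sub by blast
  have c1': "c (k1 + 2*m) = 1" by (rule one[OF cX])
  have s1: "s (k1 + 2*m) = 1" if "s \<in> S" for s using one SN that Nbar_sub by blast
  have sum1: "(\<Sum>s\<in>S. a s) = 1"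
  proof -
    have "c (k1 + 2*m) = (\<Sum>s\<in>S. a s * s (k1 + 2*m))" using e by blast
    also have "\<dots> = (\<Sum>s\<in>S. a s)" using s1 by (intro sum.cong) auto
    finally show ?thesis using c1' by simp
  qed
  have notc: "c \<noteq> (\<lambda>j. 1 * s j)" if "s \<in> S" for s using that S(1) by auto
  consider "card S = 0" | "card S = 1" | "card S = 2" using S(2) by linarith
  thus False
  proof cases
    case 1
    hence "S = {}" using fS by simp
    thus False using sum1 by simp
  next
    case 2
    then obtain s where s: "S = {s}" by (rule card_1_singletonE)
    hence "a s = 1" using sum1 by simp
    hence "c = (\<lambda>j. 1 * s j)" using e s by (simp add: fun_eq_iff)
    thus False using notc s by blast
  next
    case 3
    then obtain s t where st: "S = {s, t}" "s \<noteq> t" by (meson card_2_iff)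
    have ast: "a s + a t = 1" using sum1 st by simp
    have "c = (\<lambda>j. a s * s j + a t * t j)" using e st by (simp add: fun_eq_iff)
    moreover have "(a s = 0 \<or> a s = 1) \<and> (a t = 0 \<or> a t = 1)" using F2_cases[OF q2] by blast
    moreover have "(1::'a) + 1 \<noteq> 1" using F2_two[OF q2] by simp
    ultimately have "c = (\<lambda>j. 1 * s j) \<or> c = (\<lambda>j. 1 * t j)" using ast by auto
    thus False using notc st by blast
  qed
qed

end



theorem mainTheorem18:
  fixes m :: nat and A B C :: "nat set" and Nbar :: "(nat \<Rightarrow> 'a::{finite,field}) set"
    and q :: nat and \<rho> :: nat
  assumes q_def: "q = card (UNIV :: 'a set)"
    and m2: "2 \<le> m"
    and A: "A \<noteq> {}" "A \<subset> {1..m}"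
    and B: "B \<noteq> {}" "B \<subseteq> A"
    and C: "C \<noteq> {}" "C \<subseteq> {1..m}"
    and rho: "\<rho> = (if B = A then 0 else 1)"
    and Nbar: "is_projective_rep (N2 m A B C) Nbar"
  shows "((q \<ge> 3 \<or> (q = 2 \<and> card ({1..m} - A) \<ge> 2)) \<longrightarrow>
           (real (card Nbar) = 2 * real q ^ (card B + card C) * (real q ^ m - real q ^ card A) / (real q - 1)
            \<and> is_LRC m Nbar (card Nbar) (2*m + card C)
                 ((q ^ m - \<rho> * q ^ card A) * q ^ (card B + card C - 1)) 2))
       \<and> ((q = 2 \<and> card ({1..m} - A) = 1) \<longrightarrow>
           is_LRC m Nbar (2 ^ (m + card B + card C)) (2*m + card C)
                 ((2 - \<rho>) * 2 ^ (m + card B + card C - 2)) 3)"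
proof -
  interpret S: setting m A B C Nbar
    by (unfold_locales) (rule A(1), rule A(2), rule B(1), rule B(2), rule C(1), rule C(2), rule Nbar)
  have fin: "finite Nbar" by (rule S.Nbar_fin)
  have dim: "code_dim (code m Nbar) = 2*m + card C" by (rule S.dim_code)
  have md: "min_dist Nbar (code m Nbar) ((q ^ m - \<rho> * q ^ card A) * q ^ (card B + card C - 1))"
    using S.min_dist_main unfolding q_def rho .
  have fB: "finite B" by (rule finite_subset[OF S.Bm]) simp
  have fC: "finite C" by (rule finite_subset[OF C(2)]) simp
  have kB: "1 \<le> card B" using B(1) fB by (simp add: Suc_leI card_gt_0_iff)
  have kC: "1 \<le> card C" using C(1) fC by (simp add: Suc_leI card_gt_0_iff)
  have partA: "(q \<ge> 3 \<or> (q = 2 \<and> card ({1..m} - A) \<ge> 2)) \<longrightarrow>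
           (real (card Nbar) = 2 * real q ^ (card B + card C) * (real q ^ m - real q ^ card A) / (real q - 1)
            \<and> is_LRC m Nbar (card Nbar) (2*m + card C)
                 ((q ^ m - \<rho> * q ^ card A) * q ^ (card B + card C - 1)) 2)"
  proof
    assume h: "q \<ge> 3 \<or> (q = 2 \<and> card ({1..m} - A) \<ge> 2)"
    have loc: "locality_le Nbar 2"
      using h S.loc2_big S.loc2_A unfolding q_def by blast
    have hl: "has_locality Nbar 2"
      unfolding has_locality_def
    proof (intro conjI allI impI)
      show "0 < (2::nat)" by simp
      show "locality_le Nbar 2" by (rule loc)
      fix r' :: nat assume "0 < r' \<and> r' < 2"
      hence "r' = 1" by simp
      thus "\<not> locality_le Nbar r'" using S.not_loc1 by simp
    qed
    show "real (card Nbar) = 2 * real q ^ (card B + card C) * (real q ^ m - real q ^ card A) / (real q - 1)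
            \<and> is_LRC m Nbar (card Nbar) (2*m + card C)
                 ((q ^ m - \<rho> * q ^ card A) * q ^ (card B + card C - 1)) 2"
      using S.card_Nbar_real fin dim md hl unfolding is_LRC_def q_def by simp
  qed
  have partB: "(q = 2 \<and> card ({1..m} - A) = 1) \<longrightarrow>
           is_LRC m Nbar (2 ^ (m + card B + card C)) (2*m + card C)
                 ((2 - \<rho>) * 2 ^ (m + card B + card C - 2)) 3"
  proof
    assume h: "q = 2 \<and> card ({1..m} - A) = 1"
    have q2: "card (UNIV::'a set) = 2" using h q_def by simp
    have fm: "finite {1..m}" by simp
    have cA: "card A = m - 1"
      using h card_Diff_subset[OF finite_subset[OF S.Am fm] S.Am] by simp
    have cN: "card Nbar = 2 ^ (m + card B + card C)"
    proof -
      have "(2 - 1) * card Nbar = 2 * (2 ^ (card B + card C + m) - 2 ^ (card B + card C + card A))"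
        using S.card_Nbar_nat q2 by simp
      hence e: "card Nbar = 2 * (2 ^ (card B + card C + m) - 2 ^ (card B + card C + (m - 1)))" using cA by simp
      define n where "n = card B + card C + (m - 1)"
      have "card B + card C + m = Suc n" unfolding n_def using m2 by simp
      hence "card Nbar = 2 * (2 ^ Suc n - 2 ^ n)" using e unfolding n_def by simp
      also have "\<dots> = 2 ^ Suc n" by simp
      finally show ?thesis using \<open>card B + card C + m = Suc n\<close> by (simp add: add.commute add.left_commute)
    qed
    have dd: "(q ^ m - \<rho> * q ^ card A) * q ^ (card B + card C - 1) = (2 - \<rho>) * 2 ^ (m + card B + card C - 2)"
    proof -
      define a where "a = m - 1"
      define b where "b = card B + card C - 1"
      have ma: "m = Suc a" unfolding a_def using m2 by simp
      have mb: "m + card B + card C - 2 = a + b" unfolding a_def b_def using m2 kB kC by simp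
      have e1: "q ^ m = 2 * 2 ^ a" using h ma by simp
      have e2: "q ^ card A = 2 ^ a" using h cA unfolding a_def by simp
      have e3: "q ^ (card B + card C - 1) = 2 ^ b" using h unfolding b_def by simp
      have "(q ^ m - \<rho> * q ^ card A) * q ^ (card B + card C - 1) = (2 * 2 ^ a - \<rho> * 2 ^ a) * 2 ^ b"
        unfolding e1 e2 e3 ..
      also have "\<dots> = (2 - \<rho>) * 2 ^ (a + b)" by (simp add: diff_mult_distrib power_add)
      finally show ?thesis using mb by simp
    qed
    have hl: "has_locality Nbar 3"
      unfolding has_locality_def
    proof (intro conjI allI impI)
      show "0 < (3::nat)" by simp
      show "locality_le Nbar 3" by (rule S.loc3[OF q2])
      fix r' :: nat assume "0 < r' \<and> r' < 3"
      hence "r' = 1 \<or> r' = 2" by auto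
      thus "\<not> locality_le Nbar r'" using S.not_loc1 S.notloc2[OF q2] h by auto
    qed
    show "is_LRC m Nbar (2 ^ (m + card B + card C)) (2*m + card C) ((2 - \<rho>) * 2 ^ (m + card B + card C - 2)) 3"
      using fin cN dim md hl dd unfolding is_LRC_def by simp
  qed
  show ?thesis using partA partB by blast
qed

end
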